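(* Let $(G,V,f)$ be an instance of coset identification and let $t\ge 1$ and $P\in[0,1]$. Then there exists a $t$-query (adaptive) quantum algorithm that determines $f(a)$ with average success probability $P$ if and only if there exists a $t$-query nonadaptive quantum algorithm that determines $f(a)$ with average success probability $P$.
   Context: A symmetric quantum oracle problem is a triple $(G,V,f)$ where $G$ is a finite group, $\pi:G\to U(V)$ is a unitary representation on a finite-dimensional Hilbert space $V$, and $f:G\to X$ is a function. It is an instance of coset identification if $X$ is a transitive left $G$-set and $f$ is a surjective map of left $G$-sets ($f(gh)=g\cdot f(h)$); equivalently $f$ is constant on the left cosets of the subgroup $H=\{g\in G: f(g)=f(e)\}$ and takes distinct values on distinct left cosets. A $t$-query adaptive algorithm consists of an integer $N\ge1$, a unit vector $\psi\in V\otimes\mathbb{C}^N$, unitaries $U_1,\dots,U_t$ on $V\otimes\mathbb{C}^N$ and a POVM $\{E_x\}_{x\in X}$ on $V\otimes\mathbb{C}^N$; on hidden element $a\in G$ it produces $\psi_a=U_t(\pi(a)\otimes I)U_{t-1}(\pi(a)\otimes I)\cdots U_1(\pi(a)\otimes I)\psi$ and outputs $x$ with probability $\langle\psi_a|E_x|\psi_a\rangle$. A $t$-query nonadaptive algorithm consists of $N\ge1$, a unit vector $\psi\in V^{\otimes t}\otimes\mathbb{C}^N$ and a POVM $\{E_x\}_{x\in X}$; on hidden $a$ it produces $\psi_a=(\pi(a)^{\otimes t}\otimes I)\psi$. In both cases the (average) success probability is $\frac1{|G|}\sum_{a\in G}\langle\psi_a|E_{f(a)}|\psi_a\rangle$,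 with $a$ uniform on $G$. *)

theory Defs
  imports "HOL-Algebra.Group" "Jordan_Normal_Form.Matrix"
begin

definition adj :: "complex mat \<Rightarrow> complex mat" where
  "adj A = mat (dim_col A) (dim_row A) (\<lambda>(i,j). cnj (A $$ (j,i)))"

definition unitary_mat :: "nat \<Rightarrow> complex mat \<Rightarrow> bool" where
  "unitary_mat n U \<longleftrightarrow> U \<in> carrier_mat n n \<and> adj U * U = 1\<^sub>m n \<and> U * adj U = 1\<^sub>m n"

(* Kronecker (tensor) product; index of (i,k) in C^m \<otimes> C^n is i*n+k. *)
definition kron :: "complex mat \<Rightarrow> complex mat \<Rightarrow> complex mat" where
  "kron A B = mat (dim_row A * dim_row B) (dim_col A * dim_col B)
     (\<lambda>(i,j). A $$ (i div dim_row B, j div dim_col B) * B $$ (i mod dim_row B, j mod dim_col B))"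

fun tpow :: "complex mat \<Rightarrow> nat \<Rightarrow> complex mat" where
  "tpow A 0 = 1\<^sub>m 1"
| "tpow A (Suc k) = kron (tpow A k) A"

definition psd :: "nat \<Rightarrow> complex mat \<Rightarrow> bool" where
  "psd n E \<longleftrightarrow> E \<in> carrier_mat n n \<and>
     (\<forall>v\<in>carrier_vec n. Im ((E *\<^sub>v v) \<bullet>c v) = 0 \<and> Re ((E *\<^sub>v v) \<bullet>c v) \<ge> 0)"

definition povm :: "nat \<Rightarrow> 'x set \<Rightarrow> ('x \<Rightarrow> complex mat) \<Rightarrow> bool" where
  "povm n X E \<longleftrightarrow> (\<forall>x\<in>X. psd n (E x)) \<and>
     (\<forall>i<n. \<forall>j<n. (\<Sum>x\<in>X. E x $$ (i,j)) = (1\<^sub>m n :: complex mat) $$ (i,j))"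

definition unit_vec :: "nat \<Rightarrow> complex vec \<Rightarrow> bool" where
  "unit_vec n v \<longleftrightarrow> v \<in> carrier_vec n \<and> v \<bullet>c v = 1"

definition unitary_rep :: "('g, 'b) monoid_scheme \<Rightarrow> nat \<Rightarrow> ('g \<Rightarrow> complex mat) \<Rightarrow> bool" where
  "unitary_rep G d \<pi> \<longleftrightarrow> (\<forall>g\<in>carrier G. unitary_mat d (\<pi> g)) \<and>
     (\<forall>g\<in>carrier G. \<forall>h\<in>carrier G. \<pi> (g \<otimes>\<^bsub>G\<^esub> h) = \<pi> g * \<pi> h)"

definition coset_identification ::
  "('g, 'b) monoid_scheme \<Rightarrow> 'x set \<Rightarrow> ('g \<Rightarrow> 'x \<Rightarrow> 'x) \<Rightarrow> ('g \<Rightarrow> 'x) \<Rightarrow> bool" where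
  "coset_identification G X act f \<longleftrightarrow>
     (\<forall>g\<in>carrier G. \<forall>x\<in>X. act g x \<in> X) \<and>
     (\<forall>x\<in>X. act \<one>\<^bsub>G\<^esub> x = x) \<and>
     (\<forall>g\<in>carrier G. \<forall>h\<in>carrier G. \<forall>x\<in>X. act (g \<otimes>\<^bsub>G\<^esub> h) x = act g (act h x)) \<and>
     (\<forall>x\<in>X. \<forall>y\<in>X. \<exists>g\<in>carrier G. act g x = y) \<and>
     f ` carrier G = X \<and>
     (\<forall>g\<in>carrier G. \<forall>h\<in>carrier G. f (g \<otimes>\<^bsub>G\<^esub> h) = act g (f h))"

definition success_prob ::
  "('g, 'b) monoid_scheme \<Rightarrow> ('g \<Rightarrow> 'x) \<Rightarrow> ('x \<Rightarrow> complex mat) \<Rightarrow> ('g \<Rightarrow> complex vec) \<Rightarrow> real" where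
  "success_prob G f E st =
     (\<Sum>a\<in>carrier G. Re ((E (f a) *\<^sub>v st a) \<bullet>c st a)) / real (card (carrier G))"

fun adaptive_state :: "complex mat \<Rightarrow> (nat \<Rightarrow> complex mat) \<Rightarrow> nat \<Rightarrow> complex vec \<Rightarrow> complex vec" where
  "adaptive_state Orc U 0 \<psi> = \<psi>"
| "adaptive_state Orc U (Suc k) \<psi> = U (Suc k) *\<^sub>v (Orc *\<^sub>v adaptive_state Orc U k \<psi>)"

definition adaptive_alg_exists ::
  "('g, 'b) monoid_scheme \<Rightarrow> nat \<Rightarrow> ('g \<Rightarrow> complex mat) \<Rightarrow> 'x set \<Rightarrow> ('g \<Rightarrow> 'x) \<Rightarrow> nat \<Rightarrow> real \<Rightarrow> bool" where
  "adaptive_alg_exists G d \<pi> X f t P \<longleftrightarrow>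
     (\<exists>N \<psi> U E. N \<ge> 1 \<and> unit_vec (d * N) \<psi> \<and>
        (\<forall>i\<in>{1..t}. unitary_mat (d * N) (U i)) \<and> povm (d * N) X E \<and>
        success_prob G f E (\<lambda>a. adaptive_state (kron (\<pi> a) (1\<^sub>m N)) U t \<psi>) = P)"

definition nonadaptive_alg_exists ::
  "('g, 'b) monoid_scheme \<Rightarrow> nat \<Rightarrow> ('g \<Rightarrow> complex mat) \<Rightarrow> 'x set \<Rightarrow> ('g \<Rightarrow> 'x) \<Rightarrow> nat \<Rightarrow> real \<Rightarrow> bool" where
  "nonadaptive_alg_exists G d \<pi> X f t P \<longleftrightarrow>
     (\<exists>N \<psi> E. N \<ge> 1 \<and> unit_vec (d ^ t * N) \<psi> \<and> povm (d ^ t * N) X E \<and>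
        success_prob G f E (\<lambda>a. kron (tpow (\<pi> a) t) (1\<^sub>m N) *\<^sub>v \<psi>) = P)"

end

theory Submission
  imports Defs "Jordan_Normal_Form.Schur_Decomposition"
begin


lemma mat_mult_entry:
  assumes "A \<in> carrier_mat n m" "B \<in> carrier_mat m p" "i < n" "j < p"
  shows "(A * B) $$ (i,j) = (\<Sum>k<m. A $$ (i,k) * B $$ (k,j))"
  using assms by (auto simp: index_mult_mat scalar_prod_def lessThan_atLeast0 intro!: sum.cong)

lemma mat_vec_entry:
  assumes "A \<in> carrier_mat n m" "v \<in> carrier_vec m" "i < n"
  shows "(A *\<^sub>v v) $ i = (\<Sum>k<m. A $$ (i,k) * v $ k)"
  using assms by (auto simp: mult_mat_vec_def scalar_prod_def lessThan_atLeast0 intro!: sum.cong)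

lemma cscalar_sum:
  assumes "v \<in> carrier_vec n" "w \<in> carrier_vec n"
  shows "v \<bullet>c w = (\<Sum>i<n. v $ i * cnj (w $ i))"
  using assms by (auto simp: scalar_prod_def lessThan_atLeast0 intro!: sum.cong)

lemma adj_carrier[simp]: "A \<in> carrier_mat n m \<Longrightarrow> adj A \<in> carrier_mat m n"
  by (auto simp: adj_def)

lemma adj_dims[simp]: "dim_row (adj A) = dim_col A" "dim_col (adj A) = dim_row A"
  by (auto simp: adj_def)

lemma adj_index[simp]: "i < dim_col A \<Longrightarrow> j < dim_row A \<Longrightarrow> adj A $$ (i,j) = cnj (A $$ (j,i))"
  by (auto simp: adj_def)

lemma adj_adj[simp]: "adj (adj A) = A"
  by (rule eq_matI, auto)

lemma adj_mult: assumes "A \<in> carrier_mat n m" "B \<in> carrier_mat m p"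
  shows "adj (A * B) = adj B * adj A"
proof (rule eq_matI)
  fix i j assume ij: "i < dim_row (adj B * adj A)" "j < dim_col (adj B * adj A)"
  hence i: "i < p" and j: "j < n" using assms by auto
  have "adj (A * B) $$ (i,j) = cnj ((A*B) $$ (j,i))" using assms i j by auto
  also have "\<dots> = (\<Sum>k<m. cnj (A $$ (j,k)) * cnj (B $$ (k,i)))"
    by (subst mat_mult_entry[OF assms j i], simp)
  also have "\<dots> = (adj B * adj A) $$ (i,j)"
    by (subst mat_mult_entry[of _ p m _ n], insert assms i j, auto simp: mult.commute intro!: sum.cong)
  finally show "adj (A * B) $$ (i,j) = (adj B * adj A) $$ (i,j)" .
qed (insert assms, auto)

lemma adj_one[simp]: "adj (1\<^sub>m n) = 1\<^sub>m n"
  by (rule eq_matI, auto)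

lemma adj_vec:
  assumes "A \<in> carrier_mat n m" "x \<in> carrier_vec n" "y \<in> carrier_vec m"
  shows "(adj A *\<^sub>v x) \<bullet>c y = x \<bullet>c (A *\<^sub>v y)"
proof -
  have "(adj A *\<^sub>v x) \<bullet>c y = (\<Sum>i<m. (\<Sum>k<n. cnj (A $$ (k,i)) * x $ k) * cnj (y $ i))"
    using assms by (subst cscalar_sum[of _ m], auto simp: mat_vec_entry[of _ m n] simp del: index_mult_mat_vec intro!: sum.cong mult_mat_vec_carrier[of _ m n])
  also have "\<dots> = (\<Sum>k<n. x $ k * cnj (\<Sum>i<m. A $$ (k,i) * y $ i))"
    by (simp add: sum_distrib_left sum_distrib_right sum.swap[of _ "{..<m}"] mult_ac)
  also have "\<dots> = x \<bullet>c (A *\<^sub>v y)"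
    using assms by (subst cscalar_sum[of _ n], auto simp: mat_vec_entry[of _ n m] simp del: index_mult_mat_vec intro!: sum.cong)
  finally show ?thesis .
qed

lemma unitary_carrier: "unitary_mat n U \<Longrightarrow> U \<in> carrier_mat n n"
  by (simp add: unitary_mat_def)

lemma unitary_norm:
  assumes "unitary_mat n U" "v \<in> carrier_vec n"
  shows "(U *\<^sub>v v) \<bullet>c (U *\<^sub>v v) = v \<bullet>c v"
proof -
  have U: "U \<in> carrier_mat n n" and UU: "adj U * U = 1\<^sub>m n" using assms by (auto simp: unitary_mat_def)
  have "(U *\<^sub>v v) \<bullet>c (U *\<^sub>v v) = (adj U *\<^sub>v (U *\<^sub>v v)) \<bullet>c v"
    using adj_vec[of U n n "U *\<^sub>v v" v] U assms by auto
  also have "adj U *\<^sub>v (U *\<^sub>v v) = v" using U UU assms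
    by (metis adj_carrier assoc_mult_mat_vec one_mult_mat_vec)
  finally show ?thesis .
qed

lemma unitary_mult: assumes "unitary_mat n U" "unitary_mat n V" shows "unitary_mat n (U * V)"
proof -
  have U: "U \<in> carrier_mat n n" and V: "V \<in> carrier_mat n n" using assms by (auto simp: unitary_mat_def)
  have aU: "adj U \<in> carrier_mat n n" and aV: "adj V \<in> carrier_mat n n" using U V by auto
  have "adj (U*V) * (U*V) = (adj V * adj U) * (U * V)" by (simp add: adj_mult[OF U V])
  also have "\<dots> = adj V * (adj U * (U * V))" using aU aV U V by (simp add: assoc_mult_mat[of _ n n _ n _ n])
  also have "adj U * (U * V) = (adj U * U) * V" using aU U V by (simp add: assoc_mult_mat[of _ n n _ n _ n])
  also have "\<dots> = V" using assms V by (simp add: unitary_mat_def)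
  finally have 1: "adj (U*V) * (U*V) = 1\<^sub>m n" using assms by (simp add: unitary_mat_def)
  have "(U*V) * adj (U*V) = (U * V) * (adj V * adj U)" by (simp add: adj_mult[OF U V])
  also have "\<dots> = U * (V * (adj V * adj U))" using aU aV U V by (intro assoc_mult_mat[of _ n n _ n _ n]) auto
  also have "V * (adj V * adj U) = (V * adj V) * adj U" using aU aV V by (simp add: assoc_mult_mat[of _ n n _ n _ n])
  also have "\<dots> = adj U" using assms aU by (auto simp: unitary_mat_def)
  finally have 2: "(U*V) * adj (U*V) = 1\<^sub>m n" using assms by (simp add: unitary_mat_def)
  show ?thesis using 1 2 U V by (auto simp: unitary_mat_def)
qed

lemma unitary_one: "unitary_mat n (1\<^sub>m n)"
  by (simp add: unitary_mat_def)

lemma unitary_adj: "unitary_mat n U \<Longrightarrow> unitary_mat n (adj U)"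
  by (auto simp: unitary_mat_def)


lemma sum_split_mult:
  "(\<Sum>k<m*n. f k) = (\<Sum>i<m. \<Sum>j<n. f (i*n+j::nat)) " (is "?L = ?R")
proof -
  have bij: "bij_betw (\<lambda>(i,j). i*n+j) ({..<m}\<times>{..<n}) {..<m*n}"
  proof (rule bij_betwI[where g = "\<lambda>k. (k div n, k mod n)"])
    show "(\<lambda>(i,j). i*n+j) \<in> {..<m}\<times>{..<n} \<rightarrow> {..<m*n}"
    proof
      fix x assume "x \<in> {..<m}\<times>{..<n}"
      then obtain i j where x: "x = (i,j)" "i < m" "j < n" by auto
      have "i*n+j < i*n+n" using x by simp
      also have "\<dots> = (Suc i)*n" by simp
      also have "\<dots> \<le> m*n" using x by (intro mult_le_mono1) auto
      finally show "(\<lambda>(i,j). i*n+j) x \<in> {..<m*n}" using x by simp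
    qed
    show "(\<lambda>k. (k div n, k mod n)) \<in> {..<m*n} \<rightarrow> {..<m}\<times>{..<n}"
      by (auto simp: less_mult_imp_div_less) (metis mod_less_divisor mult_zero_right not_less_zero gr0I)
  qed auto
  have "?L = (\<Sum>x\<in>{..<m}\<times>{..<n}. f ((\<lambda>(i,j). i*n+j) x))"
    by (rule sum.reindex_bij_betw[OF bij, symmetric])
  also have "\<dots> = ?R" by (simp add: sum.cartesian_product split_def)
  finally show ?thesis .
qed

lemma kron_carrier[simp]: "A \<in> carrier_mat a b \<Longrightarrow> B \<in> carrier_mat c e \<Longrightarrow> kron A B \<in> carrier_mat (a*c) (b*e)"
  by (auto simp: kron_def)

lemma kron_dims[simp]: "dim_row (kron A B) = dim_row A * dim_row B" "dim_col (kron A B) = dim_col A * dim_col B"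
  by (auto simp: kron_def)

lemma kron_index:
  assumes "A \<in> carrier_mat a b" "B \<in> carrier_mat c e" "i < a*c" "j < b*e"
  shows "kron A B $$ (i,j) = A $$ (i div c, j div e) * B $$ (i mod c, j mod e)"
  using assms by (auto simp: kron_def)

lemma kron_index2:
  assumes "A \<in> carrier_mat a b" "B \<in> carrier_mat c e" "i < a" "j < b" "k < c" "l < e"
  shows "kron A B $$ (i*c+k, j*e+l) = A $$ (i, j) * B $$ (k, l)"
proof -
  have "i*c+k < a*c"
  proof -
    have "i*c+k < (Suc i)*c" using assms by simp
    also have "\<dots> \<le> a*c" using assms by (intro mult_le_mono1) auto
    finally show ?thesis .
  qed
  moreover have "j*e+l < b*e"
  proof -
    have "j*e+l < (Suc j)*e" using assms by simp
    also have "\<dots> \<le> b*e" using assms by (intro mult_le_mono1) auto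
    finally show ?thesis .
  qed
  ultimately show ?thesis using assms by (simp add: kron_index)
qed

lemma idx_lt: "i < a \<Longrightarrow> k < c \<Longrightarrow> i*c+k < a*(c::nat)"
proof -
  assume "i < a" "k < c"
  hence "i*c+k < (Suc i)*c" by simp
  also have "\<dots> \<le> a*c" using \<open>i<a\<close> by (intro mult_le_mono1) auto
  finally show ?thesis .
qed

lemma kron_mult:
  assumes A: "A \<in> carrier_mat a b" and B: "B \<in> carrier_mat c e"
    and C: "C \<in> carrier_mat b p" and D: "D \<in> carrier_mat e q"
  shows "kron A B * kron C D = kron (A*C) (B*D)"
proof (rule eq_matI)
  fix i j assume "i < dim_row (kron (A*C) (B*D))" "j < dim_col (kron (A*C) (B*D))"
  hence i: "i < a*c" and j: "j < p*q" using assms by auto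
  have c0: "c > 0" using i by (cases c) auto
  have q0: "q > 0" using j by (cases q) auto
  have "(kron A B * kron C D) $$ (i,j) = (\<Sum>k<b*e. kron A B $$ (i,k) * kron C D $$ (k,j))"
    by (rule mat_mult_entry[OF kron_carrier[OF A B] kron_carrier[OF C D] i j])
  also have "\<dots> = (\<Sum>k1<b. \<Sum>k2<e. kron A B $$ (i,k1*e+k2) * kron C D $$ (k1*e+k2,j))"
    by (rule sum_split_mult)
  also have "\<dots> = (\<Sum>k1<b. \<Sum>k2<e. (A $$ (i div c, k1) * C $$ (k1, j div q)) * (B $$ (i mod c, k2) * D $$ (k2, j mod q)))"
    by (intro sum.cong refl, subst kron_index[OF A B i], simp add: idx_lt,
        subst kron_index[OF C D _ j], simp add: idx_lt, simp)
  also have "\<dots> = (\<Sum>k1<b. A $$ (i div c, k1) * C $$ (k1, j div q)) * (\<Sum>k2<e. B $$ (i mod c, k2) * D $$ (k2, j mod q))"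
    by (simp add: sum_product)
  also have "\<dots> = (A*C) $$ (i div c, j div q) * (B*D) $$ (i mod c, j mod q)"
    using i j c0 q0 
    by (simp add: mat_mult_entry[OF A C] mat_mult_entry[OF B D] less_mult_imp_div_less)
  also have "\<dots> = kron (A*C) (B*D) $$ (i,j)"
    using i j by (simp add: kron_index[OF mult_carrier_mat[OF A C] mult_carrier_mat[OF B D]])
  finally show "(kron A B * kron C D) $$ (i,j) = kron (A*C) (B*D) $$ (i,j)" .
qed (insert assms, auto)

lemma kron_one: "kron (1\<^sub>m a) (1\<^sub>m b) = 1\<^sub>m (a*b)"
proof (rule eq_matI)
  fix i j assume "i < dim_row (1\<^sub>m (a*b))" "j < dim_col (1\<^sub>m (a*b))"
  hence i: "i < a*b" and j: "j < a*b" by auto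
  have b0: "b > 0" using i by (cases b) auto
  have "i = j \<longleftrightarrow> i div b = j div b \<and> i mod b = j mod b"
    by (metis div_mult_mod_eq)
  thus "kron (1\<^sub>m a) (1\<^sub>m b) $$ (i,j) = 1\<^sub>m (a*b) $$ (i,j)"
    using i j b0 by (simp add: kron_index[of _ a a _ b b] less_mult_imp_div_less)
qed auto

lemma kron_one1_left: assumes "A \<in> carrier_mat a b" shows "kron (1\<^sub>m 1) A = A"
proof (rule eq_matI)
  fix i j assume "i < dim_row A" "j < dim_col A"
  hence i: "i < 1*a" and j: "j < 1*b" using assms by auto
  show "kron (1\<^sub>m 1) A $$ (i,j) = A $$ (i,j)"
    using kron_index[OF one_carrier_mat assms i j] i j by simp
qed (insert assms, auto)

lemma adj_kron: assumes "A \<in> carrier_mat a b" "B \<in> carrier_mat c e"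
  shows "adj (kron A B) = kron (adj A) (adj B)"
proof (rule eq_matI)
  fix i j assume "i < dim_row (kron (adj A) (adj B))" "j < dim_col (kron (adj A) (adj B))"
  hence i: "i < b*e" and j: "j < a*c" using assms by auto
  have e0: "e > 0" using i by (cases e) auto
  have c0: "c > 0" using j by (cases c) auto
  show "adj (kron A B) $$ (i,j) = kron (adj A) (adj B) $$ (i,j)"
    using i j assms e0 c0
    by (simp add: kron_index[of _ a b _ c e] kron_index[of _ b a _ e c] less_mult_imp_div_less)
qed (insert assms, auto)

lemma divmod_aux:
  fixes i p c :: nat assumes p0: "p > 0"
  shows "i div p div c = i div (c*p) \<and> i div p mod c = i mod (c*p) div p \<and> i mod p = i mod (c*p) mod p"
proof -
  have a: "i mod (p*c) = p*(i div p mod c) + i mod p" by (rule mod_mult2_eq)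
  have "i mod (c*p) div p = i div p mod c" using a p0 by (simp add: mult.commute)
  moreover have "i mod (c*p) mod p = i mod p" using a p0 by (simp add: mult.commute)
  moreover have "i div p div c = i div (c*p)"
  proof -
    have "i div (c*p) = i div (p*c)" by (simp add: mult.commute)
    thus ?thesis by (simp add: div_mult2_eq)
  qed
  ultimately show ?thesis by simp
qed

lemma kron_assoc:
  assumes A: "A \<in> carrier_mat a b" and B: "B \<in> carrier_mat c e" and C: "C \<in> carrier_mat p q"
  shows "kron (kron A B) C = kron A (kron B C)"
proof (rule eq_matI)
  fix i j assume "i < dim_row (kron A (kron B C))" "j < dim_col (kron A (kron B C))"
  hence i: "i < a*(c*p)" and j: "j < b*(e*q)" using assms by auto
  have p0: "p > 0" and c0: "c > 0" using i by (cases p; cases c; auto)+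
  have q0: "q > 0" and e0: "e > 0" using j by (cases q; cases e; auto)+
  have i': "i < a*c*p" and j': "j < b*e*q" using i j by (simp_all add: mult.assoc)
  have 1: "i div p div c = i div (c*p)" "i div p mod c = i mod (c*p) div p" "i mod p = i mod (c*p) mod p"
    using divmod_aux[OF p0, of i c] by auto
  have 2: "j div q div e = j div (e*q)" "j div q mod e = j mod (e*q) div q" "j mod q = j mod (e*q) mod q"
    using divmod_aux[OF q0, of j e] by auto
  have "kron (kron A B) C $$ (i,j) = A $$ (i div p div c, j div q div e) * B $$ (i div p mod c, j div q mod e) * C $$ (i mod p, j mod q)"
    using i' j' p0 q0 c0 e0 assms
    by (simp add: kron_index[OF kron_carrier[OF A B] C] kron_index[OF A B] less_mult_imp_div_less)
  also have "\<dots> = kron A (kron B C) $$ (i,j)"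
    using i j p0 q0 c0 e0 assms
    by (simp add: kron_index[OF A kron_carrier[OF B C]] kron_index[OF B C] 1 2)
  finally show "kron (kron A B) C $$ (i,j) = kron A (kron B C) $$ (i,j)" .
qed (insert assms, auto simp: mult.assoc)

lemma unitary_kron: assumes "unitary_mat a A" "unitary_mat b B" shows "unitary_mat (a*b) (kron A B)"
proof -
  have A: "A \<in> carrier_mat a a" and B: "B \<in> carrier_mat b b" using assms by (auto simp: unitary_mat_def)
  show ?thesis using assms A B
    by (auto simp: unitary_mat_def adj_kron[OF A B] kron_mult[OF A B adj_carrier[OF A] adj_carrier[OF B]]
       kron_mult[OF adj_carrier[OF A] adj_carrier[OF B] A B] kron_one)
qed

lemma tpow_carrier: "A \<in> carrier_mat d d \<Longrightarrow> tpow A k \<in> carrier_mat (d^k) (d^k)"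
  by (induct k) (auto simp: mult.commute intro!: kron_carrier[of _ "d^k" "d^k" _ d d, simplified mult.commute])

lemma tpow_mult: assumes "A \<in> carrier_mat d d" "B \<in> carrier_mat d d"
  shows "tpow A k * tpow B k = tpow (A * B) k"
  by (induct k) (insert assms, auto simp: kron_mult[OF tpow_carrier[OF assms(1)] assms(1) tpow_carrier[OF assms(2)] assms(2)])

lemma tpow_adj: assumes "A \<in> carrier_mat d d" shows "adj (tpow A k) = tpow (adj A) k"
  by (induct k) (insert assms, auto simp: adj_kron[OF tpow_carrier])

lemma tpow_one: "tpow (1\<^sub>m d) k = 1\<^sub>m (d^k)"
  by (induct k) (auto simp: kron_one mult.commute)

lemma tpow_unitary: "unitary_mat d A \<Longrightarrow> unitary_mat (d^k) (tpow A k)"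
proof (induct k)
  case 0 thus ?case using unitary_one[of 1] by simp
next
  case (Suc k) thus ?case using unitary_kron[of "d^k" "tpow A k" d A] by (simp add: mult.commute)
qed

lemma tpow_1: "A \<in> carrier_mat a b \<Longrightarrow> tpow A 1 = A"
  by (simp add: kron_one1_left[unfolded One_nat_def])


definition dmat :: "nat \<Rightarrow> (nat \<Rightarrow> complex) \<Rightarrow> complex mat" where
  "dmat n g = mat n n (\<lambda>(i,j). if i = j then g i else 0)"

lemma dmat_carrier[simp]: "dmat n g \<in> carrier_mat n n"
  by (simp add: dmat_def)

lemma dmat_index[simp]: "i < n \<Longrightarrow> j < n \<Longrightarrow> dmat n g $$ (i,j) = (if i = j then g i else 0)"
  by (simp add: dmat_def)

lemma sum_delta_mult: "k < (n::nat) \<Longrightarrow> (\<Sum>l<n. (a l :: complex) * (if l = k then g l else 0)) = a k * g k"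
  by (simp add: if_distrib sum.delta sum.delta' cong: if_cong)

lemma sum_delta_mult2: assumes "k < (n::nat)" shows "(\<Sum>l<n. (if k = l then g l else 0) * (a l :: complex)) = g k * a k"
proof -
  have "(\<Sum>l<n. (if k = l then g l else 0) * (a l :: complex)) = (\<Sum>l<n. if k = l then g k * a k else 0)"
    by (intro sum.cong) auto
  thus ?thesis using assms by simp
qed

lemma udu_entry:
  assumes U: "U \<in> carrier_mat n n" and i: "i < n" and j: "j < n"
  shows "(U * dmat n g * adj U) $$ (i,j) = (\<Sum>k<n. U$$(i,k) * g k * cnj (U$$(j,k)))"
proof -
  have "(U * dmat n g * adj U) $$ (i,j) = (\<Sum>k<n. (U * dmat n g)$$(i,k) * adj U $$ (k,j))"
    by (rule mat_mult_entry[of _ n n _ n]) (use assms in auto)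
  also have "\<dots> = (\<Sum>k<n. (U$$(i,k) * g k) * cnj (U$$(j,k)))"
  proof (rule sum.cong[OF refl])
    fix k assume k: "k \<in> {..<n}"
    have "(U * dmat n g)$$(i,k) = (\<Sum>l<n. U$$(i,l) * dmat n g $$(l,k))"
      by (rule mat_mult_entry) (use assms k in auto)
    also have "\<dots> = (\<Sum>l<n. U$$(i,l) * (if l = k then g l else 0))"
      using k by (intro sum.cong) auto
    also have "\<dots> = U$$(i,k) * g k" using k by (simp add: sum_delta_mult)
    finally show "(U * dmat n g)$$(i,k) * adj U $$ (k,j) = (U$$(i,k) * g k) * cnj (U$$(j,k))"
      using k U j by simp
  qed
  finally show ?thesis by simp
qed

lemma cscalar_smult_left: "v \<in> carrier_vec n \<Longrightarrow> w \<in> carrier_vec n \<Longrightarrow> (a \<cdot>\<^sub>v v) \<bullet>c w = a * (v \<bullet>c w)"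
  by (simp add: cscalar_sum[of _ n] sum_distrib_left mult.assoc)

lemma cscalar_smult_right: "v \<in> carrier_vec n \<Longrightarrow> w \<in> carrier_vec n \<Longrightarrow> v \<bullet>c (a \<cdot>\<^sub>v w) = cnj a * (v \<bullet>c w)"
  by (simp add: cscalar_sum[of _ n] sum_distrib_left mult_ac)

lemma cscalar_conj: "v \<in> carrier_vec n \<Longrightarrow> w \<in> carrier_vec n \<Longrightarrow> v \<bullet>c w = cnj (w \<bullet>c v)"
  by (simp add: cscalar_sum[of _ n] mult.commute)

lemma mat_of_cols_entry: "j < length vs \<Longrightarrow> i < n \<Longrightarrow> mat_of_cols n vs $$ (i,j) = vs ! j $ i"
  by (simp add: mat_of_cols_def)

definition nrmz :: "complex vec \<Rightarrow> complex vec" where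
  "nrmz w = (1 / complex_of_real (sqrt (Re (w \<bullet>c w)))) \<cdot>\<^sub>v w"

lemma nrmz_carrier[simp]: "w \<in> carrier_vec n \<Longrightarrow> nrmz w \<in> carrier_vec n"
  by (simp add: nrmz_def)

lemma pos_cscalar:
  assumes "w \<in> carrier_vec n" "w \<bullet>c w \<noteq> 0"
  shows "Im (w \<bullet>c w) = 0" "Re (w \<bullet>c w) > 0"
proof -
  have "0 \<le> w \<bullet>c w" by (rule conjugate_square_ge_0_vec)
  thus "Im (w \<bullet>c w) = 0" by (simp add: less_eq_complex_def)
  with \<open>0 \<le> w \<bullet>c w\<close> assms(2) show "Re (w \<bullet>c w) > 0"
    by (auto simp: less_eq_complex_def complex_eq_iff)
qed

lemma nrmz_norm:
  assumes "w \<in> carrier_vec n" "w \<bullet>c w \<noteq> 0"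
  shows "nrmz w \<bullet>c nrmz w = 1"
proof -
  note p = pos_cscalar[OF assms]
  define r where "r = Re (w \<bullet>c w)"
  have w: "w \<bullet>c w = complex_of_real r" using p by (simp add: r_def complex_eq_iff)
  have r: "r > 0" using p by (simp add: r_def)
  have "nrmz w \<bullet>c nrmz w = (1 / complex_of_real (sqrt r)) * cnj (1 / complex_of_real (sqrt r)) * (w \<bullet>c w)"
    unfolding nrmz_def r_def[symmetric]
    using assms by (simp add: cscalar_smult_left[of _ n] cscalar_smult_right[of _ n])
  also have "\<dots> = 1" using r unfolding w
    by (simp add: field_simps of_real_mult[symmetric] del: of_real_mult)
  finally show ?thesis .
qed

lemma nrmz_unit: assumes "w \<in> carrier_vec n" "w \<bullet>c w = 1" shows "nrmz w = w"
  using assms by (simp add: nrmz_def)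

lemma nrmz_orth:
  assumes "v \<in> carrier_vec n" "w \<in> carrier_vec n" "v \<bullet>c w = 0"
  shows "nrmz v \<bullet>c nrmz w = 0"
  using assms unfolding nrmz_def by (simp add: cscalar_smult_left[of _ n] cscalar_smult_right[of _ n])

lemma herm_eigen:
  assumes A: "(A :: complex mat) \<in> carrier_mat (Suc m) (Suc m)"
  shows "\<exists>e v. v \<in> carrier_vec (Suc m) \<and> v \<noteq> 0\<^sub>v (Suc m) \<and> A *\<^sub>v v = e \<cdot>\<^sub>v v"
proof -
  obtain as where cp: "char_poly A = (\<Prod> a \<leftarrow> as. [:-a,1:])" and len: "length as = Suc m"
    using char_poly_factorized[OF A] by blast
  then obtain e es where as: "as = e # es" by (cases as) auto
  have "poly (char_poly A) e = 0" by (simp add: cp as)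
  hence "eigenvalue A e" using eigenvalue_root_char_poly[OF A] by simp
  thus ?thesis using A unfolding eigenvalue_def eigenvector_def by auto
qed

lemma orthonormal_completion:
  assumes u: "(u :: complex vec) \<in> carrier_vec n" and u1: "u \<bullet>c u = 1"
  shows "\<exists>ws. length ws = n \<and> set ws \<subseteq> carrier_vec n \<and> ws ! 0 = u \<and>
     (\<forall>i<n. \<forall>j<n. ws ! i \<bullet>c ws ! j = (if i = j then 1 else 0))"
proof -
  interpret cof_vec_space n "TYPE(complex)" .
  have u0: "u \<noteq> 0\<^sub>v n"
  proof
    assume "u = 0\<^sub>v n"
    hence "u \<bullet>c u = 0" by simp
    with u1 show False by simp
  qed
  note bc = basis_completion[OF u u0]
  define b where "b = basis_completion u"
  define ws where "ws = gram_schmidt n b"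
  have n0: "n > 0" using bc(6) bc(7) u0 u by (cases n) auto
  from bc have dist: "distinct b" and ind: "\<not> lin_dep (set b)" and bcar: "set b \<subseteq> carrier_vec n"
    and hdb: "hd b = u" and lenb: "length b = n" by (auto simp: b_def)
  from hdb lenb n0 obtain vs where bv: "b = u # vs" by (cases b) auto
  note gs = gram_schmidt_result[OF bcar dist ind ws_def]
  have hd: "hd ws = u" unfolding ws_def bv by (rule gram_schmidt_hd[OF u])
  define ws' where "ws' = map nrmz ws"
  have len: "length ws' = n" using gs lenb by (simp add: ws'_def)
  have car: "set ws' \<subseteq> carrier_vec n" using gs by (auto simp: ws'_def)
  have ws0: "ws ! 0 = u" using hd gs lenb n0 by (cases ws) auto
  have "ws' ! 0 = u" using ws0 gs lenb n0 nrmz_unit[OF u u1] by (simp add: ws'_def)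
  moreover have "\<forall>i<n. \<forall>j<n. ws' ! i \<bullet>c ws' ! j = (if i = j then 1 else 0)"
  proof (intro allI impI)
    fix i j assume i: "i < n" and j: "j < n"
    have li: "i < length ws" and lj: "j < length ws" using i j gs lenb by auto
    have ci: "ws ! i \<in> carrier_vec n" and cj: "ws ! j \<in> carrier_vec n" using li lj gs by auto
    have orth: "ws ! i \<bullet>c ws ! j = 0 \<longleftrightarrow> i \<noteq> j" using gs(2) li lj by (auto simp: corthogonal_def)
    show "ws' ! i \<bullet>c ws' ! j = (if i = j then 1 else 0)"
    proof (cases "i = j")
      case True thus ?thesis using orth nrmz_norm[OF ci] li by (simp add: ws'_def)
    next
      case False thus ?thesis using orth nrmz_orth[OF ci cj] li lj by (simp add: ws'_def)
    qed
  qed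
  ultimately show ?thesis using len car by blast
qed

lemma unitary_of_orthonormal:
  assumes len: "length ws = n" and car: "set ws \<subseteq> carrier_vec n"
    and on: "\<forall>i<n. \<forall>j<n. ws ! i \<bullet>c ws ! j = (if i = j then 1 else 0)"
  shows "unitary_mat n (mat_of_cols n ws)"
proof -
  let ?W = "mat_of_cols n ws"
  have W: "?W \<in> carrier_mat n n" using len by auto
  have 1: "adj ?W * ?W = 1\<^sub>m n"
  proof (rule eq_matI)
    fix i j assume "i < dim_row (1\<^sub>m n)" "j < dim_col (1\<^sub>m n)"
    hence i: "i < n" and j: "j < n" by auto
    have cj: "ws ! j \<in> carrier_vec n" and ci: "ws ! i \<in> carrier_vec n" using car len i j by auto
    have "(adj ?W * ?W) $$ (i,j) = (\<Sum>k<n. adj ?W $$ (i,k) * ?W $$ (k,j))"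
      by (rule mat_mult_entry[of _ n n _ n]) (use W i j in auto)
    also have "\<dots> = (\<Sum>k<n. ws ! j $ k * cnj (ws ! i $ k))"
      using W i j len by (intro sum.cong) (auto simp: mat_of_cols_entry mult.commute)
    also have "\<dots> = ws ! j \<bullet>c ws ! i" using ci cj by (simp add: cscalar_sum[of _ n])
    also have "\<dots> = 1\<^sub>m n $$ (i,j)" using on i j by auto
    finally show "(adj ?W * ?W) $$ (i,j) = 1\<^sub>m n $$ (i,j)" .
  qed (use W in auto)
  have 2: "?W * adj ?W = 1\<^sub>m n" by (rule mat_mult_left_right_inverse[OF _ W 1]) (use W in auto)
  show ?thesis using 1 2 W by (simp add: unitary_mat_def)
qed

lemma sum_lessThan_Suc_shift: "(\<Sum>k<Suc m. f k) = f 0 + (\<Sum>k<m. f (Suc k))"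
  by (rule sum.lessThan_Suc_shift)


lemma matmul_col: assumes "A \<in> carrier_mat n n" "ws ! j \<in> carrier_vec n" "j < length ws" "k < n"
  shows "(A * mat_of_cols n ws) $$ (k,j) = (A *\<^sub>v ws ! j) $ k"
  using assms by (simp add: col_mat_of_cols)

lemma assoc5:
  assumes W: "W \<in> carrier_mat n n" and B: "B \<in> carrier_mat n n" and D: "D \<in> carrier_mat n n"
    and aB: "aB \<in> carrier_mat n n" and aW: "aW \<in> carrier_mat n n"
  shows "W * (B * D * aB) * aW = (W * B) * D * (aB * aW)"
proof -
  have "W * (B * D * aB) = W * (B * D) * aB" using W B D aB
    by (intro assoc_mult_mat[symmetric, of _ n n _ n _ n]) auto
  also have "W * (B * D) = W * B * D" using W B D by (intro assoc_mult_mat[symmetric, of _ n n _ n _ n]) auto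
  finally have "W * (B * D * aB) * aW = W * B * D * aB * aW" by simp
  also have "\<dots> = W * B * D * (aB * aW)" using W B D aB aW
    by (intro assoc_mult_mat[of _ n n _ n _ n]) auto
  finally show ?thesis .
qed

theorem spectral:
  assumes "A \<in> carrier_mat n n" "adj A = A"
  shows "\<exists>U d. unitary_mat n U \<and> A = U * dmat n (\<lambda>i. complex_of_real (d i)) * adj U"
  using assms
proof (induct n arbitrary: A)
  case 0
  show ?case
    by (rule exI[of _ "1\<^sub>m 0"], rule exI[of _ "\<lambda>_. 0"], rule conjI[OF unitary_one], rule eq_matI, use 0 in auto)
next
  case (Suc m A)
  note A = Suc.prems(1) and H = Suc.prems(2)
  let ?n = "Suc m"
  obtain e v where v: "v \<in> carrier_vec ?n" "v \<noteq> 0\<^sub>v ?n" "A *\<^sub>v v = e \<cdot>\<^sub>v v" using herm_eigen[OF A] by blast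
  have vv: "v \<bullet>c v \<noteq> 0" using conjugate_square_eq_0_vec[OF v(1)] v(2) by auto
  define u where "u = nrmz v"
  have u: "u \<in> carrier_vec ?n" "u \<bullet>c u = 1" using nrmz_norm[OF v(1) vv] v(1) by (auto simp: u_def)
  have Au: "A *\<^sub>v u = e \<cdot>\<^sub>v u"
    unfolding u_def nrmz_def using v A by (intro eq_vecI) (auto simp: mult_mat_vec)
  have e1: "(A *\<^sub>v u) \<bullet>c u = e" using Au u by (simp add: cscalar_smult_left[of _ ?n])
  have e2: "(A *\<^sub>v u) \<bullet>c u = cnj e"
  proof -
    have "(A *\<^sub>v u) \<bullet>c u = (adj A *\<^sub>v u) \<bullet>c u" using H by simp
    also have "\<dots> = u \<bullet>c (A *\<^sub>v u)" by (rule adj_vec[OF A u(1) u(1)])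
    also have "\<dots> = cnj e" using Au u by (simp add: cscalar_smult_right[of _ ?n])
    finally show ?thesis .
  qed
  have "Im e = 0" using arg_cong[OF trans[OF e1[symmetric] e2], of Im] by simp
  hence ereal: "e = complex_of_real (Re e)" by (simp add: complex_eq_iff)
  obtain ws where ws: "length ws = ?n" "set ws \<subseteq> carrier_vec ?n" "ws ! 0 = u"
    "\<forall>i<?n. \<forall>j<?n. ws ! i \<bullet>c ws ! j = (if i = j then 1 else 0)"
    using orthonormal_completion[OF u] by blast
  define W where "W = mat_of_cols ?n ws"
  have Wu: "unitary_mat ?n W" unfolding W_def by (rule unitary_of_orthonormal[OF ws(1,2,4)])
  have W: "W \<in> carrier_mat ?n ?n" using Wu by (simp add: unitary_mat_def)
  have wcar: "\<And>j. j < ?n \<Longrightarrow> ws ! j \<in> carrier_vec ?n" using ws by auto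
  define A' where "A' = adj W * (A * W)"
  have A'c: "A' \<in> carrier_mat ?n ?n" unfolding A'_def
    by (rule mult_carrier_mat[OF adj_carrier[OF W] mult_carrier_mat[OF A W]])
  have A'e: "A' $$ (i,j) = (A *\<^sub>v ws ! j) \<bullet>c ws ! i" if i: "i < ?n" and j: "j < ?n" for i j
  proof -
    have "A' $$ (i,j) = (\<Sum>k<?n. adj W $$ (i,k) * (A * W) $$ (k,j))"
      unfolding A'_def by (rule mat_mult_entry[of _ ?n ?n _ ?n]) (use A W i j in auto)
    also have "\<dots> = (\<Sum>k<?n. (A *\<^sub>v ws ! j) $ k * cnj (ws ! i $ k))"
      using W i j ws(1) wcar[OF j] A
      by (intro sum.cong refl) (simp add: W_def matmul_col mat_of_cols_entry mult.commute)
    also have "\<dots> = (A *\<^sub>v ws ! j) \<bullet>c ws ! i" using A wcar[OF i] wcar[OF j]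
      by (simp add: cscalar_sum[of _ ?n])
    finally show ?thesis .
  qed
  have A'0: "A' $$ (i,0) = (if i = 0 then e else 0)" if i: "i < ?n" for i
  proof -
    have "A' $$ (i,0) = e * (ws ! 0 \<bullet>c ws ! i)"
      using A'e[OF i, of 0] Au ws(3) i u wcar[OF i] by (simp add: cscalar_smult_left[of _ ?n])
    thus ?thesis using ws(4) i by auto
  qed
  have A'h: "A' $$ (i,j) = cnj (A' $$ (j,i))" if i: "i < ?n" and j: "j < ?n" for i j
  proof -
    have "A' $$ (i,j) = (adj A *\<^sub>v ws ! j) \<bullet>c ws ! i" using A'e[OF i j] H by simp
    also have "\<dots> = ws ! j \<bullet>c (A *\<^sub>v ws ! i)" by (rule adj_vec[OF A wcar[OF j] wcar[OF i]])
    also have "\<dots> = cnj ((A *\<^sub>v ws ! i) \<bullet>c ws ! j)" using A wcar[OF i] wcar[OF j]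
      by (intro cscalar_conj[of _ ?n]) auto
    finally show ?thesis using A'e[OF j i] by simp
  qed
  define A3 where "A3 = mat m m (\<lambda>(i,j). A' $$ (Suc i, Suc j))"
  have A3c: "A3 \<in> carrier_mat m m" by (simp add: A3_def)
  have A3h: "adj A3 = A3"
  proof (rule eq_matI)
    fix i j assume "i < dim_row A3" "j < dim_col A3"
    hence i: "i < m" and j: "j < m" by (auto simp: A3_def)
    have "adj A3 $$ (i,j) = cnj (A' $$ (Suc j, Suc i))" using i j by (simp add: A3_def)
    also have "\<dots> = A' $$ (Suc i, Suc j)" using A'h[of "Suc i" "Suc j"] i j by simp
    finally show "adj A3 $$ (i,j) = A3 $$ (i,j)" using i j by (simp add: A3_def)
  qed (auto simp: A3_def)
  obtain U3 d3 where U3: "unitary_mat m U3" and A3d: "A3 = U3 * dmat m (\<lambda>i. complex_of_real (d3 i)) * adj U3"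
    using Suc.hyps[OF A3c A3h] by blast
  have U3c: "U3 \<in> carrier_mat m m" using U3 by (simp add: unitary_mat_def)
  define Bm where "Bm = mat ?n ?n (\<lambda>(i,j). if i = 0 then (if j = 0 then 1 else 0)
       else if j = 0 then 0 else U3 $$ (i-1, j-1))"
  have Bc: "Bm \<in> carrier_mat ?n ?n" by (simp add: Bm_def)
  define d' where "d' = (\<lambda>i. if i = 0 then Re e else d3 (i - 1))"
  have Bu1: "adj Bm * Bm = 1\<^sub>m ?n"
  proof (rule eq_matI)
    fix i j assume "i < dim_row (1\<^sub>m ?n)" "j < dim_col (1\<^sub>m ?n)"
    hence i: "i < ?n" and j: "j < ?n" by auto
    have "(adj Bm * Bm) $$ (i,j) = (\<Sum>k<?n. adj Bm $$ (i,k) * Bm $$ (k,j))"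
      by (rule mat_mult_entry[of _ ?n ?n _ ?n]) (use Bc i j in auto)
    also have "\<dots> = adj Bm $$ (i,0) * Bm $$ (0,j) + (\<Sum>k<m. adj Bm $$ (i,Suc k) * Bm $$ (Suc k,j))"
      by (rule sum.lessThan_Suc_shift)
    also have "\<dots> = 1\<^sub>m ?n $$ (i,j)"
    proof (cases i)
      case 0 thus ?thesis using j by (simp add: Bm_def)
    next
      case (Suc i') note ii = this
      show ?thesis
      proof (cases j)
        case 0 thus ?thesis using i ii by (simp add: Bm_def)
      next
        case (Suc j')
        have "(\<Sum>k<m. adj Bm $$ (i,Suc k) * Bm $$ (Suc k,j)) = (\<Sum>k<m. adj U3 $$ (i',k) * U3 $$ (k,j'))"
          using i j ii Suc U3c by (intro sum.cong) (auto simp: Bm_def)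
        also have "\<dots> = (adj U3 * U3) $$ (i',j')"
          by (rule mat_mult_entry[symmetric, of _ m m _ m]) (use U3c i j ii Suc in auto)
        also have "\<dots> = 1\<^sub>m m $$ (i',j')" using U3 by (simp add: unitary_mat_def)
        finally show ?thesis using i j ii Suc by (simp add: Bm_def)
      qed
    qed
    finally show "(adj Bm * Bm) $$ (i,j) = 1\<^sub>m ?n $$ (i,j)" .
  qed (use Bc in auto)
  have Bu: "unitary_mat ?n Bm"
    using Bu1 mat_mult_left_right_inverse[OF adj_carrier[OF Bc] Bc Bu1] Bc by (simp add: unitary_mat_def)
  have A'd: "A' = Bm * dmat ?n (\<lambda>i. complex_of_real (d' i)) * adj Bm"
  proof (rule eq_matI)
    fix i j assume "i < dim_row (Bm * dmat ?n (\<lambda>i. complex_of_real (d' i)) * adj Bm)"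
      "j < dim_col (Bm * dmat ?n (\<lambda>i. complex_of_real (d' i)) * adj Bm)"
    hence i: "i < ?n" and j: "j < ?n" using Bc by auto
    have "(Bm * dmat ?n (\<lambda>i. complex_of_real (d' i)) * adj Bm) $$ (i,j)
       = (\<Sum>k<?n. Bm$$(i,k) * complex_of_real (d' k) * cnj (Bm$$(j,k)))"
      by (rule udu_entry[OF Bc i j])
    also have "\<dots> = Bm$$(i,0) * complex_of_real (d' 0) * cnj (Bm$$(j,0)) +
        (\<Sum>k<m. Bm$$(i,Suc k) * complex_of_real (d' (Suc k)) * cnj (Bm$$(j,Suc k)))"
      by (rule sum.lessThan_Suc_shift)
    also have "\<dots> = A' $$ (i,j)"
    proof (cases i)
      case 0
      show ?thesis
      proof (cases j)
        case 0 thus ?thesis using \<open>i = 0\<close> A'0[of 0] ereal by (simp add: Bm_def d'_def)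
      next
        case (Suc j') thus ?thesis using \<open>i = 0\<close> A'h[OF i j] A'0[OF j] j by (simp add: Bm_def d'_def)
      qed
    next
      case (Suc i') note ii = this
      show ?thesis
      proof (cases j)
        case 0 thus ?thesis using ii A'0[OF i] i by (simp add: Bm_def d'_def)
      next
        case (Suc j')
        have "(\<Sum>k<m. Bm$$(i,Suc k) * complex_of_real (d' (Suc k)) * cnj (Bm$$(j,Suc k)))
            = (\<Sum>k<m. U3$$(i',k) * complex_of_real (d3 k) * cnj (U3$$(j',k)))"
          using i j ii Suc by (intro sum.cong) (auto simp: Bm_def d'_def)
        also have "\<dots> = A3 $$ (i',j')" unfolding A3d
          by (rule udu_entry[symmetric, OF U3c]) (use i j ii Suc in auto)
        also have "\<dots> = A' $$ (i,j)" using i j ii Suc by (simp add: A3_def)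
        finally show ?thesis using ii Suc i j by (simp add: Bm_def)
      qed
    qed
    finally show "A' $$ (i,j) = (Bm * dmat ?n (\<lambda>i. complex_of_real (d' i)) * adj Bm) $$ (i,j)" by simp
  qed (use A'c Bc in auto)
  have WW: "W * adj W = 1\<^sub>m ?n" using Wu by (simp add: unitary_mat_def)
  have aW: "adj W \<in> carrier_mat ?n ?n" using W by simp
  have AW: "A = W * A' * adj W"
  proof -
    have "W * A' = (W * adj W) * (A * W)" unfolding A'_def using W A
      by (simp add: assoc_mult_mat[of _ ?n ?n _ ?n _ ?n])
    also have "\<dots> = A * W" using WW A W by simp
    finally have "W * A' * adj W = A * W * adj W" by simp
    also have "\<dots> = A * (W * adj W)" using A W by (simp add: assoc_mult_mat[of _ ?n ?n _ ?n _ ?n])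
    also have "\<dots> = A" using WW A by simp
    finally show ?thesis by simp
  qed
  let ?D = "dmat ?n (\<lambda>i. complex_of_real (d' i))"
  have Dc: "?D \<in> carrier_mat ?n ?n" by simp
  have "A = W * (Bm * ?D * adj Bm) * adj W" using AW A'd by simp
  also have "\<dots> = (W * Bm) * ?D * adj (W * Bm)"
    using W Bc Dc by (simp add: adj_mult[OF W Bc] assoc5[OF W Bc Dc adj_carrier[OF Bc] adj_carrier[OF W]])
  finally have "A = (W * Bm) * ?D * adj (W * Bm)" .
  moreover have "unitary_mat ?n (W * Bm)" by (rule unitary_mult[OF Wu Bu])
  ultimately show ?case by blast
qed


definition fc :: "complex mat \<Rightarrow> nat \<Rightarrow> (nat \<Rightarrow> complex) \<Rightarrow> complex mat" where
  "fc U n h = U * dmat n h * adj U"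

lemma dmat_dims[simp]: "dim_row (dmat n g) = n" "dim_col (dmat n g) = n"
  by (auto simp: dmat_def)

lemma fc_carrier[simp]: "U \<in> carrier_mat n n \<Longrightarrow> fc U n h \<in> carrier_mat n n"
  unfolding fc_def by (intro mult_carrier_mat[of _ n n _ n] dmat_carrier adj_carrier) auto

lemma fc_dims: "U \<in> carrier_mat n n \<Longrightarrow> dim_row (fc U n h) = n \<and> dim_col (fc U n h) = n"
  using fc_carrier[of U n h] by (simp del: fc_carrier)

lemma fc_entry: "U \<in> carrier_mat n n \<Longrightarrow> i < n \<Longrightarrow> j < n \<Longrightarrow>
   fc U n h $$ (i,j) = (\<Sum>k<n. U$$(i,k) * h k * cnj (U$$(j,k)))"
  unfolding fc_def by (rule udu_entry)

lemma fc_cong: "(\<And>i. i < n \<Longrightarrow> h i = k i) \<Longrightarrow> fc U n h = fc U n k"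
proof -
  assume "\<And>i. i < n \<Longrightarrow> h i = k i"
  hence "dmat n h = dmat n k" by (intro eq_matI) auto
  thus ?thesis by (simp add: fc_def)
qed

lemma fc_add: assumes "U \<in> carrier_mat n n"
  shows "fc U n h + fc U n k = fc U n (\<lambda>i. h i + k i)"
proof (rule eq_matI)
  fix i j assume "i < dim_row (fc U n (\<lambda>i. h i + k i))" "j < dim_col (fc U n (\<lambda>i. h i + k i))"
  hence i: "i < n" and j: "j < n" using fc_dims[OF assms] by auto
  have "(fc U n h + fc U n k) $$ (i,j) = fc U n h $$ (i,j) + fc U n k $$ (i,j)"
    using i j fc_dims[OF assms] by simp
  also have "\<dots> = (\<Sum>l<n. U$$(i,l) * h l * cnj (U$$(j,l)) + U$$(i,l) * k l * cnj (U$$(j,l)))"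
    by (simp add: fc_entry[OF assms i j] sum.distrib)
  also have "\<dots> = fc U n (\<lambda>i. h i + k i) $$ (i,j)"
    by (simp add: fc_entry[OF assms i j] distrib_left distrib_right)
  finally show "(fc U n h + fc U n k) $$ (i,j) = fc U n (\<lambda>i. h i + k i) $$ (i,j)" .
qed (use fc_dims[OF assms] in auto)

lemma dmat_mult: "dmat n h * dmat n k = dmat n (\<lambda>i. h i * k i)"
proof (rule eq_matI)
  fix i j assume "i < dim_row (dmat n (\<lambda>i. h i * k i))" "j < dim_col (dmat n (\<lambda>i. h i * k i))"
  hence i: "i < n" and j: "j < n" by (auto simp: dmat_def)
  have "(dmat n h * dmat n k) $$ (i,j) = (\<Sum>l<n. dmat n h $$ (i,l) * dmat n k $$ (l,j))"
    by (rule mat_mult_entry) (use i j in auto)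
  also have "\<dots> = (\<Sum>l<n. (if i = l then h l else 0) * (if l = j then k l else 0))"
    using i j by (intro sum.cong) auto
  also have "\<dots> = (if i = j then h i * k i else 0)"
  proof -
    have "(\<Sum>l<n. (if i = l then h l else 0) * (if l = j then k l else 0)) = (\<Sum>l<n. if i = l then (h i * (if i = j then k i else 0)) else 0)"
      by (intro sum.cong) auto
    thus ?thesis using i by simp
  qed
  finally show "(dmat n h * dmat n k) $$ (i,j) = dmat n (\<lambda>i. h i * k i) $$ (i,j)" using i j by simp
qed (auto simp: dmat_def)

lemma adj_dmat: "adj (dmat n h) = dmat n (\<lambda>i. cnj (h i))"
  by (rule eq_matI) (auto simp: dmat_def)

lemma dmat_one: "dmat n (\<lambda>_. 1) = 1\<^sub>m n"
  by (rule eq_matI) (auto simp: dmat_def)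

lemma sq_assoc: "A \<in> carrier_mat n n \<Longrightarrow> B \<in> carrier_mat n n \<Longrightarrow> C \<in> carrier_mat n n \<Longrightarrow> A * B * C = A * (B * C)"
  by (rule assoc_mult_mat)

lemma fc_mult: assumes U: "unitary_mat n U"
  shows "fc U n h * fc U n k = fc U n (\<lambda>i. h i * k i)"
proof -
  have Uc: "U \<in> carrier_mat n n" and UU: "adj U * U = 1\<^sub>m n" using U by (auto simp: unitary_mat_def)
  have aU: "adj U \<in> carrier_mat n n" using Uc by simp
  note c = Uc aU dmat_carrier[of n h] dmat_carrier[of n k]
  have "fc U n h * fc U n k = U * dmat n h * (adj U * (U * dmat n k * adj U))"
    unfolding fc_def using c by (intro sq_assoc) (auto intro!: mult_carrier_mat[of _ n n _ n])
  also have "adj U * (U * dmat n k * adj U) = (adj U * U) * (dmat n k * adj U)"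
    using c by (simp add: sq_assoc[of _ n] mult_carrier_mat[of _ n n _ n])
  also have "\<dots> = dmat n k * adj U" using UU c by simp
  also have "U * dmat n h * (dmat n k * adj U) = U * (dmat n h * dmat n k) * adj U"
    using c by (simp add: sq_assoc[of _ n] mult_carrier_mat[of _ n n _ n])
  finally show ?thesis by (simp add: fc_def dmat_mult)
qed

lemma fc_adj: assumes "U \<in> carrier_mat n n"
  shows "adj (fc U n h) = fc U n (\<lambda>i. cnj (h i))"
  using assms unfolding fc_def
  by (simp add: adj_mult[of _ n n _ n] mult_carrier_mat[of _ n n _ n] adj_dmat sq_assoc[of _ n])

lemma fc_one: assumes "unitary_mat n U" shows "fc U n (\<lambda>_. 1) = 1\<^sub>m n"
  using assms by (auto simp: fc_def dmat_one unitary_mat_def)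

lemma fc_quad: assumes U: "U \<in> carrier_mat n n" and v: "v \<in> carrier_vec n"
  shows "(fc U n h *\<^sub>v v) \<bullet>c v = (\<Sum>k<n. h k * ((adj U *\<^sub>v v) $ k * cnj ((adj U *\<^sub>v v) $ k)))"
proof -
  let ?y = "adj U *\<^sub>v v"
  have y: "?y \<in> carrier_vec n" by (rule mult_mat_vec_carrier[OF adj_carrier[OF U] v])
  have "fc U n h *\<^sub>v v = (U * dmat n h) *\<^sub>v ?y" unfolding fc_def using U v
    by (intro assoc_mult_mat_vec[of _ n n _ n]) (auto intro!: mult_carrier_mat[of _ n n _ n])
  also have "\<dots> = U *\<^sub>v (dmat n h *\<^sub>v ?y)" using U y
    by (intro assoc_mult_mat_vec[of _ n n _ n]) auto
  finally have "fc U n h *\<^sub>v v = U *\<^sub>v (dmat n h *\<^sub>v ?y)" .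
  hence "(fc U n h *\<^sub>v v) \<bullet>c v = (adj (adj U) *\<^sub>v (dmat n h *\<^sub>v ?y)) \<bullet>c v" by simp
  also have "\<dots> = (dmat n h *\<^sub>v ?y) \<bullet>c ?y"
    by (rule adj_vec[OF adj_carrier[OF U] mult_mat_vec_carrier[OF dmat_carrier y] v])
  also have "\<dots> = (\<Sum>k<n. (dmat n h *\<^sub>v ?y) $ k * cnj (?y $ k))"
    by (rule cscalar_sum[OF mult_mat_vec_carrier[OF dmat_carrier y] y])
  also have "\<dots> = (\<Sum>k<n. h k * (?y $ k * cnj (?y $ k)))"
  proof (intro sum.cong refl)
    fix k assume k: "k \<in> {..<n}"
    have "(dmat n h *\<^sub>v ?y) $ k = (\<Sum>l<n. dmat n h $$ (k,l) * ?y $ l)"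
      by (rule mat_vec_entry[OF dmat_carrier y]) (use k in auto)
    also have "\<dots> = (\<Sum>l<n. if k = l then h k * ?y $ l else 0)" using k by (intro sum.cong) auto
    also have "\<dots> = h k * ?y $ k" using k by simp
    finally show "(dmat n h *\<^sub>v ?y) $ k * cnj (?y $ k) = h k * (?y $ k * cnj (?y $ k))" by simp
  qed
  finally show ?thesis .
qed

lemma fc_psd: assumes U: "U \<in> carrier_mat n n" and v: "v \<in> carrier_vec n"
  and h: "\<And>k. k < n \<Longrightarrow> Im (h k) = 0 \<and> Re (h k) \<ge> 0"
  shows "Im ((fc U n h *\<^sub>v v) \<bullet>c v) = 0 \<and> Re ((fc U n h *\<^sub>v v) \<bullet>c v) \<ge> 0"
proof -
  have t: "Im (h k * (z * cnj z)) = 0 \<and> Re (h k * (z * cnj z)) \<ge> 0" if k: "k < n" for k z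
  proof -
    have hk: "h k = complex_of_real (Re (h k))" using h[OF k] by (simp add: complex_eq_iff)
    have "h k * (z * cnj z) = complex_of_real (Re (h k) * ((Re z)\<^sup>2 + (Im z)\<^sup>2))"
      by (subst hk, simp add: complex_mult_cnj)
    thus ?thesis using h[OF k] by simp
  qed
  let ?y = "adj U *\<^sub>v v"
  have "Im (\<Sum>k<n. h k * (?y $ k * cnj (?y $ k))) = (\<Sum>k<n. Im (h k * (?y $ k * cnj (?y $ k))))"
    by (rule Im_sum)
  also have "\<dots> = 0" by (rule sum.neutral) (use t in blast)
  finally have 1: "Im (\<Sum>k<n. h k * (?y $ k * cnj (?y $ k))) = 0" .
  have "Re (\<Sum>k<n. h k * (?y $ k * cnj (?y $ k))) = (\<Sum>k<n. Re (h k * (?y $ k * cnj (?y $ k))))"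
    by (rule Re_sum)
  also have "\<dots> \<ge> 0" by (rule sum_nonneg) (use t in blast)
  finally have 2: "Re (\<Sum>k<n. h k * (?y $ k * cnj (?y $ k))) \<ge> 0" .
  show ?thesis unfolding fc_quad[OF U v] using 1 2 by simp
qed


lemma unit_cancel1: "unitary_mat n U \<Longrightarrow> Z \<in> carrier_mat n m \<Longrightarrow> adj U * (U * Z) = Z"
  by (subst assoc_mult_mat[symmetric, of _ n n _ n _ m]) (auto simp: unitary_mat_def)

lemma unit_cancel2: "unitary_mat n U \<Longrightarrow> Z \<in> carrier_mat n m \<Longrightarrow> U * (adj U * Z) = Z"
  by (subst assoc_mult_mat[symmetric, of _ n n _ n _ m]) (auto simp: unitary_mat_def)

lemma unit_facts: "unitary_mat n U \<Longrightarrow> adj U * U = 1\<^sub>m n \<and> U * adj U = 1\<^sub>m n \<and> U \<in> carrier_mat n n"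
  by (auto simp: unitary_mat_def)

lemma conj_mult:
  assumes U: "unitary_mat n U" and X: "X \<in> carrier_mat n n" and Y: "Y \<in> carrier_mat n n"
  shows "U * (X * Y) * adj U = (U * X * adj U) * (U * Y * adj U)"
  using U X Y unit_facts[OF U] unit_cancel1[OF U, of "Y * adj U" n]
  by (simp add: sq_assoc[of _ n] mult_carrier_mat[of _ n n _ n])

lemma conj_inv_mult:
  assumes U: "unitary_mat n U" and X: "X \<in> carrier_mat n n" and Y: "Y \<in> carrier_mat n n"
  shows "adj U * (X * Y) * U = (adj U * X * U) * (adj U * Y * U)"
  using U X Y unit_facts[OF U] unit_cancel2[OF U, of "Y * U" n]
  by (simp add: sq_assoc[of _ n] mult_carrier_mat[of _ n n _ n])

lemma conj_cancel:
  assumes U: "unitary_mat n U" and X: "X \<in> carrier_mat n n"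
  shows "U * (adj U * X * U) * adj U = X" "adj U * (U * X * adj U) * U = X"
  using U X unit_facts[OF U] unit_cancel1[OF U, of "X * U" n] unit_cancel2[OF U, of "X * adj U" n]
     unit_cancel1[OF U, of "X" n] unit_cancel2[OF U, of "X" n]
  by (simp_all add: sq_assoc[of _ n] mult_carrier_mat[of _ n n _ n])

lemma mult_dmat_entry: assumes B: "B \<in> carrier_mat n n" and i: "i < n" and j: "j < n"
  shows "(B * dmat n h) $$ (i,j) = B $$ (i,j) * h j" "(dmat n h * B) $$ (i,j) = h i * B $$ (i,j)"
proof -
  have "(B * dmat n h) $$ (i,j) = (\<Sum>l<n. B $$ (i,l) * dmat n h $$ (l,j))"
    by (rule mat_mult_entry[OF B dmat_carrier i j])
  also have "\<dots> = (\<Sum>l<n. B $$ (i,l) * (if l = j then h l else 0))" using j by (intro sum.cong) auto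
  also have "\<dots> = B $$ (i,j) * h j" using j by (rule sum_delta_mult)
  finally show "(B * dmat n h) $$ (i,j) = B $$ (i,j) * h j" .
  have "(dmat n h * B) $$ (i,j) = (\<Sum>l<n. dmat n h $$ (i,l) * B $$ (l,j))"
    by (rule mat_mult_entry[OF dmat_carrier B i j])
  also have "\<dots> = (\<Sum>l<n. (if i = l then h l else 0) * B $$ (l,j))" using i by (intro sum.cong) auto
  also have "\<dots> = h i * B $$ (i,j)" using i by (rule sum_delta_mult2)
  finally show "(dmat n h * B) $$ (i,j) = h i * B $$ (i,j)" .
qed

lemma diag_comm:
  assumes B: "B \<in> carrier_mat n n"
  and c: "B * dmat n (\<lambda>i. complex_of_real (d i)) = dmat n (\<lambda>i. complex_of_real (d i)) * B"
  shows "B * dmat n (\<lambda>i. g (d i)) = dmat n (\<lambda>i. g (d i)) * B"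
proof (rule eq_matI)
  fix i j assume "i < dim_row (dmat n (\<lambda>i. g (d i)) * B)" "j < dim_col (dmat n (\<lambda>i. g (d i)) * B)"
  hence i: "i < n" and j: "j < n" using B by auto
  have "B $$ (i,j) * complex_of_real (d j) = complex_of_real (d i) * B $$ (i,j)"
    using arg_cong[OF c, of "\<lambda>M. M $$ (i,j)"] mult_dmat_entry[OF B i j] by simp
  hence "B $$ (i,j) = 0 \<or> d i = d j" by (auto simp: mult.commute)
  thus "(B * dmat n (\<lambda>i. g (d i))) $$ (i,j) = (dmat n (\<lambda>i. g (d i)) * B) $$ (i,j)"
    using mult_dmat_entry[OF B i j] by auto
qed (use B in auto)

lemma fc_comm:
  assumes U: "unitary_mat n U" and A: "A \<in> carrier_mat n n"
  and comm: "A * fc U n (\<lambda>i. complex_of_real (d i)) = fc U n (\<lambda>i. complex_of_real (d i)) * A"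
  shows "A * fc U n (\<lambda>i. g (d i)) = fc U n (\<lambda>i. g (d i)) * A"
proof -
  note Uf = unit_facts[OF U]
  define A' where "A' = adj U * A * U"
  have A'c: "A' \<in> carrier_mat n n" unfolding A'_def using A Uf by (auto intro!: mult_carrier_mat[of _ n n _ n])
  have fcd: "fc U n h = U * dmat n h * adj U" for h by (simp add: fc_def)
  have inv: "adj U * fc U n h * U = dmat n h" for h
    unfolding fcd using conj_cancel(2)[OF U dmat_carrier] .
  have "adj U * (A * fc U n (\<lambda>i. complex_of_real (d i))) * U = adj U * (fc U n (\<lambda>i. complex_of_real (d i)) * A) * U"
    using comm by simp
  hence "A' * dmat n (\<lambda>i. complex_of_real (d i)) = dmat n (\<lambda>i. complex_of_real (d i)) * A'"
    unfolding conj_inv_mult[OF U A fc_carrier[OF Uf[THEN conjunct2, THEN conjunct2]]]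
      conj_inv_mult[OF U fc_carrier[OF Uf[THEN conjunct2, THEN conjunct2]] A] inv A'_def .
  hence c2: "A' * dmat n (\<lambda>i. g (d i)) = dmat n (\<lambda>i. g (d i)) * A'" by (rule diag_comm[OF A'c])
  have AA: "A = U * A' * adj U" unfolding A'_def using conj_cancel(1)[OF U A] by simp
  have "A * fc U n (\<lambda>i. g (d i)) = U * (A' * dmat n (\<lambda>i. g (d i))) * adj U"
    unfolding AA fcd conj_mult[OF U A'c dmat_carrier] ..
  also have "\<dots> = U * (dmat n (\<lambda>i. g (d i)) * A') * adj U" using c2 by simp
  also have "\<dots> = fc U n (\<lambda>i. g (d i)) * A"
    unfolding AA fcd conj_mult[OF U dmat_carrier A'c] ..
  finally show ?thesis .
qed

lemma fc_psd_eig: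
  assumes U: "unitary_mat n U"
  and psd: "\<And>v. v \<in> carrier_vec n \<Longrightarrow> Re ((fc U n (\<lambda>i. complex_of_real (d i)) *\<^sub>v v) \<bullet>c v) \<ge> 0"
  and i: "i < n"
  shows "d i \<ge> 0"
proof -
  note Uf = unit_facts[OF U]
  have Uc: "U \<in> carrier_mat n n" using Uf by simp
  let ?v = "col U i"
  have v: "?v \<in> carrier_vec n" using Uc by (intro carrier_vecI) auto
  have y: "adj U *\<^sub>v ?v = Matrix.unit_vec n i"
  proof -
    have "adj U *\<^sub>v ?v = col (adj U * U) i" using Uc i by (simp add: col_mult2[of _ n n _ n])
    also have "\<dots> = Matrix.unit_vec n i" using Uf i by simp
    finally show ?thesis .
  qed
  have "(fc U n (\<lambda>i. complex_of_real (d i)) *\<^sub>v ?v) \<bullet>c ?v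
     = (\<Sum>k<n. complex_of_real (d k) * (Matrix.unit_vec n i $ k * cnj (Matrix.unit_vec n i $ k)))"
    unfolding fc_quad[OF Uc v] y ..
  also have "\<dots> = (\<Sum>k<n. if k = i then complex_of_real (d i) else 0)"
    by (intro sum.cong) (auto simp: Matrix.unit_vec_def)
  also have "\<dots> = complex_of_real (d i)" using i by simp
  finally show ?thesis using psd[OF v] by simp
qed


definition avgm :: "'c set \<Rightarrow> ('c \<Rightarrow> complex mat) \<Rightarrow> nat \<Rightarrow> nat \<Rightarrow> complex mat" where
  "avgm S F k l = mat k l (\<lambda>(i,j). (\<Sum>c\<in>S. F c $$ (i,j)) / of_nat (card S))"

lemma avgm_carrier[simp]: "avgm S F k l \<in> carrier_mat k l"
  by (simp add: avgm_def)

lemma avgm_dims[simp]: "dim_row (avgm S F k l) = k" "dim_col (avgm S F k l) = l"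
  by (simp_all add: avgm_def)

lemma avgm_index: "i < k \<Longrightarrow> j < l \<Longrightarrow> avgm S F k l $$ (i,j) = (\<Sum>c\<in>S. F c $$ (i,j)) / of_nat (card S)"
  by (simp add: avgm_def)

lemma avgm_mult_vec:
  assumes F: "\<And>c. c \<in> S \<Longrightarrow> F c \<in> carrier_mat k l" and v: "v \<in> carrier_vec l"
  shows "avgm S F k l *\<^sub>v v = vec k (\<lambda>i. (\<Sum>c\<in>S. (F c *\<^sub>v v) $ i) / of_nat (card S))"
proof (rule eq_vecI)
  fix i assume "i < dim_vec (vec k (\<lambda>i. (\<Sum>c\<in>S. (F c *\<^sub>v v) $ i) / of_nat (card S)))"
  hence i: "i < k" by simp
  have "(avgm S F k l *\<^sub>v v) $ i = (\<Sum>j<l. avgm S F k l $$ (i,j) * v $ j)"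
    by (rule mat_vec_entry[OF avgm_carrier v i])
  also have "\<dots> = (\<Sum>j<l. (\<Sum>c\<in>S. F c $$ (i,j) * v $ j)) / of_nat (card S)"
    using i by (simp add: avgm_index sum_divide_distrib sum_distrib_right)
  also have "\<dots> = (\<Sum>c\<in>S. (\<Sum>j<l. F c $$ (i,j) * v $ j)) / of_nat (card S)"
    by (subst sum.swap) simp
  also have "\<dots> = (\<Sum>c\<in>S. (F c *\<^sub>v v) $ i) / of_nat (card S)"
    by (intro arg_cong[where f = "\<lambda>x. x / _"] sum.cong refl, rule mat_vec_entry[symmetric], rule F) (use v i in auto)
  finally show "(avgm S F k l *\<^sub>v v) $ i = vec k (\<lambda>i. (\<Sum>c\<in>S. (F c *\<^sub>v v) $ i) / of_nat (card S)) $ i"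
    using i by simp
qed simp

lemma avgm_quad:
  assumes F: "\<And>c. c \<in> S \<Longrightarrow> F c \<in> carrier_mat k l" and v: "v \<in> carrier_vec l" and w: "w \<in> carrier_vec k"
  shows "(avgm S F k l *\<^sub>v v) \<bullet>c w = (\<Sum>c\<in>S. (F c *\<^sub>v v) \<bullet>c w) / of_nat (card S)"
proof -
  have e: "avgm S F k l *\<^sub>v v = vec k (\<lambda>i. (\<Sum>c\<in>S. (F c *\<^sub>v v) $ i) / of_nat (card S))"
    by (rule avgm_mult_vec[OF F v])
  have "(avgm S F k l *\<^sub>v v) \<bullet>c w = vec k (\<lambda>i. (\<Sum>c\<in>S. (F c *\<^sub>v v) $ i) / of_nat (card S)) \<bullet>c w"
    by (simp only: e)
  also have "\<dots> = (\<Sum>i<k. (\<Sum>c\<in>S. (F c *\<^sub>v v) $ i) / of_nat (card S) * cnj (w $ i))"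
    using w by (subst cscalar_sum[of _ k]) auto
  also have "\<dots> = (\<Sum>c\<in>S. (\<Sum>i<k. (F c *\<^sub>v v) $ i * cnj (w $ i))) / of_nat (card S)"
    by (simp add: sum_divide_distrib sum_distrib_right sum.swap[of _ "{..<k}"])
  also have "\<dots> = (\<Sum>c\<in>S. (F c *\<^sub>v v) \<bullet>c w) / of_nat (card S)"
    by (intro arg_cong[where f = "\<lambda>x. x / _"] sum.cong refl, rule cscalar_sum[symmetric, of _ k],
        rule mult_mat_vec_carrier[OF F v], auto simp: w)
  finally show ?thesis .
qed

lemma mult_avgm_left:
  assumes A: "A \<in> carrier_mat p k" and F: "\<And>c. c \<in> S \<Longrightarrow> F c \<in> carrier_mat k l"
  shows "A * avgm S F k l = avgm S (\<lambda>c. A * F c) p l"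
proof (rule eq_matI)
  fix i j assume "i < dim_row (avgm S (\<lambda>c. A * F c) p l)" "j < dim_col (avgm S (\<lambda>c. A * F c) p l)"
  hence i: "i < p" and j: "j < l" by auto
  have "(A * avgm S F k l) $$ (i,j) = (\<Sum>m<k. A $$ (i,m) * avgm S F k l $$ (m,j))"
    by (rule mat_mult_entry[OF A avgm_carrier i j])
  also have "\<dots> = (\<Sum>c\<in>S. (\<Sum>m<k. A $$ (i,m) * F c $$ (m,j))) / of_nat (card S)"
    using j by (simp add: avgm_index sum_divide_distrib sum_distrib_left sum.swap[of _ "{..<k}"] mult.assoc)
  also have "\<dots> = avgm S (\<lambda>c. A * F c) p l $$ (i,j)"
    using i j A F by (simp add: avgm_index mat_mult_entry[of _ p k _ l])
  finally show "(A * avgm S F k l) $$ (i,j) = avgm S (\<lambda>c. A * F c) p l $$ (i,j)" .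
qed (use A in auto)

lemma mult_avgm_right:
  assumes B: "B \<in> carrier_mat l q" and F: "\<And>c. c \<in> S \<Longrightarrow> F c \<in> carrier_mat k l"
  shows "avgm S F k l * B = avgm S (\<lambda>c. F c * B) k q"
proof (rule eq_matI)
  fix i j assume "i < dim_row (avgm S (\<lambda>c. F c * B) k q)" "j < dim_col (avgm S (\<lambda>c. F c * B) k q)"
  hence i: "i < k" and j: "j < q" by auto
  have "(avgm S F k l * B) $$ (i,j) = (\<Sum>m<l. avgm S F k l $$ (i,m) * B $$ (m,j))"
    by (rule mat_mult_entry[OF avgm_carrier B i j])
  also have "\<dots> = (\<Sum>c\<in>S. (\<Sum>m<l. F c $$ (i,m) * B $$ (m,j))) / of_nat (card S)"
    using i by (simp add: avgm_index sum_divide_distrib sum_distrib_right sum.swap[of _ "{..<l}"])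
  also have "\<dots> = avgm S (\<lambda>c. F c * B) k q $$ (i,j)"
    using i j B F by (simp add: avgm_index mat_mult_entry[of _ k l _ q])
  finally show "(avgm S F k l * B) $$ (i,j) = avgm S (\<lambda>c. F c * B) k q $$ (i,j)" .
qed (use B in auto)

lemma adj_avgm:
  assumes F: "\<And>c. c \<in> S \<Longrightarrow> F c \<in> carrier_mat k l"
  shows "adj (avgm S F k l) = avgm S (\<lambda>c. adj (F c)) l k"
proof (rule eq_matI)
  fix i j assume "i < dim_row (avgm S (\<lambda>c. adj (F c)) l k)" "j < dim_col (avgm S (\<lambda>c. adj (F c)) l k)"
  hence i: "i < l" and j: "j < k" by auto
  have "(\<Sum>c\<in>S. adj (F c) $$ (i,j)) = (\<Sum>c\<in>S. cnj (F c $$ (j,i)))"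
  proof (intro sum.cong refl)
    fix c assume "c \<in> S"
    hence "F c \<in> carrier_mat k l" by (rule F)
    thus "adj (F c) $$ (i,j) = cnj (F c $$ (j,i))" using i j by simp
  qed
  thus "adj (avgm S F k l) $$ (i,j) = avgm S (\<lambda>c. adj (F c)) l k $$ (i,j)"
    using i j by (simp add: avgm_index cnj_sum)
qed auto

lemma avgm_cong: "(\<And>c. c \<in> S \<Longrightarrow> F c = F' c) \<Longrightarrow> avgm S F k l = avgm S F' k l"
  by (simp add: avgm_def cong: sum.cong)

lemma avgm_reindex: "bij_betw h S S \<Longrightarrow> avgm S (\<lambda>c. F (h c)) k l = avgm S F k l"
proof (rule eq_matI)
  fix i j assume "i < dim_row (avgm S F k l)" "j < dim_col (avgm S F k l)"
  hence i: "i < k" and j: "j < l" by auto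
  assume "bij_betw h S S"
  from sum.reindex_bij_betw[OF this, of "\<lambda>c. F c $$ (i,j)"]
  show "avgm S (\<lambda>c. F (h c)) k l $$ (i,j) = avgm S F k l $$ (i,j)" using i j by (simp add: avgm_index)
qed auto

lemma (in group) bij_lmult: "g \<in> carrier G \<Longrightarrow> bij_betw (\<lambda>c. g \<otimes> c) (carrier G) (carrier G)"
  by (rule bij_betwI[where g = "\<lambda>c. inv g \<otimes> c"]) (auto simp: m_assoc[symmetric])

lemma (in group) bij_invmult: "b \<in> carrier G \<Longrightarrow> bij_betw (\<lambda>c. inv c \<otimes> b) (carrier G) (carrier G)"
proof (rule bij_betwI[where g = "\<lambda>y. b \<otimes> inv y"])
  assume b: "b \<in> carrier G"
  show "(\<lambda>c. inv c \<otimes> b) \<in> carrier G \<rightarrow> carrier G" using b by auto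
  show "(\<lambda>y. b \<otimes> inv y) \<in> carrier G \<rightarrow> carrier G" using b by auto
  fix x assume x: "x \<in> carrier G"
  show "b \<otimes> inv (inv x \<otimes> b) = x" using b x by (simp add: inv_mult_group m_assoc[symmetric])
  show "inv (b \<otimes> inv x) \<otimes> b = x" using b x by (simp add: inv_mult_group m_assoc)
qed

definition lc :: "nat \<Rightarrow> 'i set \<Rightarrow> ('i \<Rightarrow> complex) \<Rightarrow> ('i \<Rightarrow> complex vec) \<Rightarrow> complex vec" where
  "lc n S c v = vec n (\<lambda>r. \<Sum>x\<in>S. c x * v x $ r)"

lemma lc_carrier[simp]: "lc n S c v \<in> carrier_vec n" by (simp add: lc_def)
lemma lc_dim[simp]: "dim_vec (lc n S c v) = n" by (simp add: lc_def)
lemma lc_index: "r < n \<Longrightarrow> lc n S c v $ r = (\<Sum>x\<in>S. c x * v x $ r)" by (simp add: lc_def)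

lemma mat_lc:
  assumes M: "M \<in> carrier_mat m n" and v: "\<And>x. x \<in> S \<Longrightarrow> v x \<in> carrier_vec n"
  shows "M *\<^sub>v lc n S c v = lc m S c (\<lambda>x. M *\<^sub>v v x)"
proof (rule eq_vecI)
  fix r assume "r < dim_vec (lc m S c (\<lambda>x. M *\<^sub>v v x))"
  hence r: "r < m" by simp
  have "(M *\<^sub>v lc n S c v) $ r = (\<Sum>k<n. M $$ (r,k) * (\<Sum>x\<in>S. c x * v x $ k))"
    by (rule trans[OF mat_vec_entry[OF M lc_carrier r]], intro sum.cong refl, simp add: lc_index)
  also have "\<dots> = (\<Sum>x\<in>S. c x * (\<Sum>k<n. M $$ (r,k) * v x $ k))"
    by (simp add: sum_distrib_left sum.swap[of _ "{..<n}"] mult_ac)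
  also have "\<dots> = lc m S c (\<lambda>x. M *\<^sub>v v x) $ r"
    unfolding lc_index[OF r] by (intro sum.cong refl, subst mat_vec_entry[OF M v r], auto)
  finally show "(M *\<^sub>v lc n S c v) $ r = lc m S c (\<lambda>x. M *\<^sub>v v x) $ r" .
qed (use M in auto)

lemma lc_lc:
  assumes "finite T"
  shows "lc n S c (\<lambda>x. lc n T e (v x)) = lc n (S \<times> T) (\<lambda>(x,y). c x * e y) (\<lambda>(x,y). v x y)"
proof (rule eq_vecI)
  fix r assume "r < dim_vec (lc n (S \<times> T) (\<lambda>(x,y). c x * e y) (\<lambda>(x,y). v x y))"
  hence r: "r < n" by simp
  show "lc n S c (\<lambda>x. lc n T e (v x)) $ r = lc n (S \<times> T) (\<lambda>(x,y). c x * e y) (\<lambda>(x,y). v x y) $ r"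
    using r by (simp add: lc_index sum.cartesian_product split_def sum_distrib_left mult.assoc)
qed simp

lemma lc_reindex: assumes "bij_betw h S S'" shows "lc n S (\<lambda>x. c (h x)) (\<lambda>x. v (h x)) = lc n S' c v"
proof (rule eq_vecI)
  fix r assume "r < dim_vec (lc n S' c v)"
  hence r: "r < n" by simp
  show "lc n S (\<lambda>x. c (h x)) (\<lambda>x. v (h x)) $ r = lc n S' c v $ r"
    using sum.reindex_bij_betw[OF assms, of "\<lambda>x. c x * v x $ r"] r by (simp add: lc_index)
qed simp

lemma lc_cong: "S = S' \<Longrightarrow> (\<And>x. x \<in> S \<Longrightarrow> c x = c' x) \<Longrightarrow> (\<And>x. x \<in> S \<Longrightarrow> v x = v' x) \<Longrightarrow> lc n S c v = lc n S' c' v'"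
  unfolding lc_def by (intro eq_vecI) auto


definition Emat :: "nat \<Rightarrow> nat \<Rightarrow> nat \<Rightarrow> complex mat" where
  "Emat d i j = mat d d (\<lambda>(p,q). if p = i \<and> q = j then 1 else 0)"

definition KE :: "nat \<Rightarrow> nat \<Rightarrow> nat \<Rightarrow> nat \<Rightarrow> complex mat" where
  "KE d N i j = kron (Emat d i j) (1\<^sub>m N)"

lemma KE_carrier[simp]: "KE d N i j \<in> carrier_mat (d*N) (d*N)"
  unfolding KE_def Emat_def by (rule kron_carrier) auto

lemma delta_pair_sum:
  assumes a: "a < d" and b: "b < d"
  shows "(\<Sum>x\<in>{..<d}\<times>{..<d}. (case x of (i,j) \<Rightarrow> (A $$ (i,j) :: complex)) * ((if a = fst x \<and> b = snd x then 1 else 0) * m))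
       = A $$ (a,b) * m"
proof -
  have "(\<Sum>x\<in>{..<d}\<times>{..<d}. (case x of (i,j) \<Rightarrow> A $$ (i,j)) * ((if a = fst x \<and> b = snd x then 1 else 0) * m))
      = (\<Sum>x\<in>{..<d}\<times>{..<d}. if x = (a,b) then A $$ (a,b) * m else 0)"
    by (intro sum.cong) auto
  also have "\<dots> = A $$ (a,b) * m" using a b by simp
  finally show ?thesis .
qed

lemma oracle_lc:
  assumes A: "A \<in> carrier_mat d d" and x: "x \<in> carrier_vec (d*N)"
  shows "kron A (1\<^sub>m N) *\<^sub>v x = lc (d*N) ({..<d}\<times>{..<d}) (\<lambda>(i,j). A $$ (i,j)) (\<lambda>(i,j). KE d N i j *\<^sub>v x)"
proof (rule eq_vecI)
  have O: "kron A (1\<^sub>m N) \<in> carrier_mat (d*N) (d*N)" using A by simp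
  fix r assume "r < dim_vec (lc (d*N) ({..<d}\<times>{..<d}) (\<lambda>(i,j). A $$ (i,j)) (\<lambda>(i,j). KE d N i j *\<^sub>v x))"
  hence r: "r < d*N" by simp
  have N0: "N > 0" using r by (cases N) auto
  have rd: "r div N < d" using r by (simp add: less_mult_imp_div_less mult.commute)
  have "lc (d*N) ({..<d}\<times>{..<d}) (\<lambda>(i,j). A $$ (i,j)) (\<lambda>(i,j). KE d N i j *\<^sub>v x) $ r
     = (\<Sum>y\<in>{..<d}\<times>{..<d}. (case y of (i,j) \<Rightarrow> A $$ (i,j)) * (\<Sum>r2<d*N. KE d N (fst y) (snd y) $$ (r,r2) * x $ r2))"
    unfolding lc_index[OF r] by (intro sum.cong refl) (auto simp: mat_vec_entry[OF KE_carrier x r])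
  also have "\<dots> = (\<Sum>r2<d*N. \<Sum>y\<in>{..<d}\<times>{..<d}. (case y of (i,j) \<Rightarrow> A $$ (i,j)) * (KE d N (fst y) (snd y) $$ (r,r2) * x $ r2))"
    by (simp add: sum_distrib_left sum.swap[of _ "{..<d*N}"])
  also have "\<dots> = (\<Sum>r2<d*N. kron A (1\<^sub>m N) $$ (r,r2) * x $ r2)"
  proof (intro sum.cong refl)
    fix r2 assume "r2 \<in> {..<d*N}"
    hence r2: "r2 < d*N" by simp
    have r2d: "r2 div N < d" using r2 by (simp add: less_mult_imp_div_less mult.commute)
    have KEe: "KE d N i j $$ (r,r2) = (if r div N = i \<and> r2 div N = j then 1 else 0) * (if r mod N = r2 mod N then 1 else 0)"
      if "i < d" "j < d" for i j
      unfolding KE_def using r r2 rd r2d N0 by (subst kron_index[of _ d d _ N N]) (auto simp: Emat_def)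
    have "(\<Sum>y\<in>{..<d}\<times>{..<d}. (case y of (i,j) \<Rightarrow> A $$ (i,j)) * (KE d N (fst y) (snd y) $$ (r,r2) * x $ r2))
       = (\<Sum>y\<in>{..<d}\<times>{..<d}. (case y of (i,j) \<Rightarrow> A $$ (i,j)) * ((if r div N = fst y \<and> r2 div N = snd y then 1 else 0) *
            ((if r mod N = r2 mod N then 1 else 0) * x $ r2)))"
      by (intro sum.cong refl) (auto simp: KEe)
    also have "\<dots> = A $$ (r div N, r2 div N) * ((if r mod N = r2 mod N then 1 else 0) * x $ r2)"
      by (rule delta_pair_sum[OF rd r2d])
    also have "\<dots> = kron A (1\<^sub>m N) $$ (r,r2) * x $ r2"
      using r r2 N0 by (subst kron_index[OF A one_carrier_mat]) auto
    finally show "(\<Sum>y\<in>{..<d}\<times>{..<d}. (case y of (i,j) \<Rightarrow> A $$ (i,j)) * (KE d N (fst y) (snd y) $$ (r,r2) * x $ r2))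
        = kron A (1\<^sub>m N) $$ (r,r2) * x $ r2" .
  qed
  also have "\<dots> = (kron A (1\<^sub>m N) *\<^sub>v x) $ r" by (rule mat_vec_entry[OF O x r, symmetric])
  finally show "(kron A (1\<^sub>m N) *\<^sub>v x) $ r = lc (d*N) ({..<d}\<times>{..<d}) (\<lambda>(i,j). A $$ (i,j)) (\<lambda>(i,j). KE d N i j *\<^sub>v x) $ r"
    by simp
qed (use assms in auto)

fun wv :: "nat \<Rightarrow> nat \<Rightarrow> (nat \<Rightarrow> complex mat) \<Rightarrow> complex vec \<Rightarrow> nat \<Rightarrow> nat \<times> nat \<Rightarrow> complex vec" where
  "wv d N U \<psi> 0 IJ = \<psi>"
| "wv d N U \<psi> (Suc k) PQ = U (Suc k) *\<^sub>v (KE d N (fst PQ mod d) (snd PQ mod d) *\<^sub>v wv d N U \<psi> k (fst PQ div d, snd PQ div d))"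

lemma wv_carrier:
  assumes "\<psi> \<in> carrier_vec (d*N)" "\<forall>i\<in>{1..k}. U i \<in> carrier_mat (d*N) (d*N)"
  shows "wv d N U \<psi> k PQ \<in> carrier_vec (d*N)"
  using assms by (induct k arbitrary: PQ) (auto intro!: mult_mat_vec_carrier[of _ "d*N" "d*N"])

lemma adaptive_carrier:
  assumes "\<psi> \<in> carrier_vec (d*N)" "\<forall>i\<in>{1..k}. U i \<in> carrier_mat (d*N) (d*N)" "A \<in> carrier_mat d d"
  shows "adaptive_state (kron A (1\<^sub>m N)) U k \<psi> \<in> carrier_vec (d*N)"
  using assms by (induct k) (auto intro!: mult_mat_vec_carrier[of _ "d*N" "d*N"] kron_carrier)

lemma pair_bij:
  fixes D d :: nat
  shows "bij_betw (\<lambda>((I,J),(i,j)). (I*d+i, J*d+j)) (({..<D}\<times>{..<D})\<times>({..<d}\<times>{..<d})) ({..<D*d}\<times>{..<D*d})"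
proof (rule bij_betwI[where g = "\<lambda>(P,Q). ((P div d, Q div d), (P mod d, Q mod d))"])
  show "(\<lambda>((I,J),(i,j)). (I*d+i, J*d+j)) \<in> ({..<D}\<times>{..<D})\<times>({..<d}\<times>{..<d}) \<rightarrow> {..<D*d}\<times>{..<D*d}"
    by (auto simp: idx_lt)
  show "(\<lambda>(P,Q). ((P div d, Q div d), (P mod d, Q mod d))) \<in> {..<D*d}\<times>{..<D*d} \<rightarrow> ({..<D}\<times>{..<D})\<times>({..<d}\<times>{..<d})"
  proof
    fix x assume "x \<in> {..<D*d}\<times>{..<D*d}"
    then obtain P Q where x: "x = (P,Q)" "P < D*d" "Q < D*d" by auto
    have d0: "d > 0" using x by (cases d) auto
    show "(\<lambda>(P,Q). ((P div d, Q div d), (P mod d, Q mod d))) x \<in> ({..<D}\<times>{..<D})\<times>({..<d}\<times>{..<d})"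
      using x d0 by (auto simp: less_mult_imp_div_less)
  qed
qed auto

theorem adaptive_expand:
  assumes A: "A \<in> carrier_mat d d" and psi: "\<psi> \<in> carrier_vec (d*N)" and U: "\<forall>i\<in>{1..k}. U i \<in> carrier_mat (d*N) (d*N)"
  shows "adaptive_state (kron A (1\<^sub>m N)) U k \<psi> = lc (d*N) ({..<d^k}\<times>{..<d^k}) (\<lambda>(I,J). tpow A k $$ (I,J)) (wv d N U \<psi> k)"
  using U
proof (induct k)
  case 0
  show ?case
  proof (rule eq_vecI)
    fix r assume "r < dim_vec (lc (d*N) ({..<d^0}\<times>{..<d^0}) (\<lambda>(I,J). tpow A 0 $$ (I,J)) (wv d N U \<psi> 0))"
    hence r: "r < d*N" by simp
    have "{..<d^0}\<times>{..<d^0} = {(0::nat,0::nat)}" by auto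
    thus "adaptive_state (kron A (1\<^sub>m N)) U 0 \<psi> $ r = lc (d*N) ({..<d^0}\<times>{..<d^0}) (\<lambda>(I,J). tpow A 0 $$ (I,J)) (wv d N U \<psi> 0) $ r"
      using r by (simp add: lc_index)
  qed (use psi in auto)
next
  case (Suc k)
  let ?n = "d*N" and ?D = "d^k"
  have Uk: "\<forall>i\<in>{1..k}. U i \<in> carrier_mat ?n ?n" using Suc.prems by auto
  have USk: "U (Suc k) \<in> carrier_mat ?n ?n" using Suc.prems by auto
  have O: "kron A (1\<^sub>m N) \<in> carrier_mat ?n ?n" using A by simp
  have wc: "\<And>PQ. wv d N U \<psi> k PQ \<in> carrier_vec ?n" by (rule wv_carrier[OF psi Uk])
  let ?S = "{..<?D}\<times>{..<?D}" and ?S' = "{..<d}\<times>{..<d}"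
  let ?\<rho> = "\<lambda>(I,J). tpow A k $$ (I,J)" and ?a = "\<lambda>(i,j). A $$ (i,j)"
  have "adaptive_state (kron A (1\<^sub>m N)) U (Suc k) \<psi> = U (Suc k) *\<^sub>v (kron A (1\<^sub>m N) *\<^sub>v lc ?n ?S ?\<rho> (wv d N U \<psi> k))"
    using Suc.hyps[OF Uk] by simp
  also have "kron A (1\<^sub>m N) *\<^sub>v lc ?n ?S ?\<rho> (wv d N U \<psi> k) = lc ?n ?S ?\<rho> (\<lambda>IJ. kron A (1\<^sub>m N) *\<^sub>v wv d N U \<psi> k IJ)"
    by (rule mat_lc[OF O wc])
  also have "\<dots> = lc ?n ?S ?\<rho> (\<lambda>IJ. lc ?n ?S' ?a (\<lambda>(i,j). KE d N i j *\<^sub>v wv d N U \<psi> k IJ))"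
    by (rule lc_cong) (auto simp: oracle_lc[OF A wc])
  also have "\<dots> = lc ?n (?S \<times> ?S') (\<lambda>(x,y). ?\<rho> x * ?a y) (\<lambda>(x,y). (case y of (i,j) \<Rightarrow> KE d N i j *\<^sub>v wv d N U \<psi> k x))"
    by (rule lc_lc) auto
  also have "U (Suc k) *\<^sub>v \<dots> = lc ?n (?S \<times> ?S') (\<lambda>(x,y). ?\<rho> x * ?a y) (\<lambda>z. U (Suc k) *\<^sub>v (case z of (x,y) \<Rightarrow> (case y of (i,j) \<Rightarrow> KE d N i j *\<^sub>v wv d N U \<psi> k x)))"
    by (rule mat_lc[OF USk]) (auto intro!: mult_mat_vec_carrier[OF KE_carrier] wc)
  also have "\<dots> = lc ?n (?S \<times> ?S') (\<lambda>z. (case z of ((I,J),(i,j)) \<Rightarrow> tpow A (Suc k) $$ (I*d+i, J*d+j)))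
        (\<lambda>z. (case z of ((I,J),(i,j)) \<Rightarrow> wv d N U \<psi> (Suc k) (I*d+i, J*d+j)))"
  proof (rule lc_cong[OF refl])
    fix z assume "z \<in> ?S \<times> ?S'"
    then obtain I J i j where z: "z = ((I,J),(i,j))" "I < ?D" "J < ?D" "i < d" "j < d" by auto
    have tc: "tpow A k \<in> carrier_mat ?D ?D" by (rule tpow_carrier[OF A])
    show "(case z of (x,y) \<Rightarrow> ?\<rho> x * ?a y) = (case z of ((I,J),(i,j)) \<Rightarrow> tpow A (Suc k) $$ (I*d+i, J*d+j))"
      using z by (simp add: kron_index2[OF tc A])
    show "U (Suc k) *\<^sub>v (case z of (x,y) \<Rightarrow> (case y of (i,j) \<Rightarrow> KE d N i j *\<^sub>v wv d N U \<psi> k x))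
        = (case z of ((I,J),(i,j)) \<Rightarrow> wv d N U \<psi> (Suc k) (I*d+i, J*d+j))"
      using z by simp
  qed
  also have "\<dots> = lc ?n ({..<?D*d}\<times>{..<?D*d}) (\<lambda>(I,J). tpow A (Suc k) $$ (I,J)) (wv d N U \<psi> (Suc k))"
    using lc_reindex[OF pair_bij[where D = "d^k" and d = d], of ?n "\<lambda>(I,J). tpow A (Suc k) $$ (I,J)" "wv d N U \<psi> (Suc k)"]
    by (simp add: split_def case_prod_beta)
  also have "?D * d = d ^ Suc k" by (simp add: mult.commute)
  finally show ?case .
qed


lemma adaptive_norm:
  assumes "\<psi> \<in> carrier_vec n" "\<forall>i\<in>{1..k}. unitary_mat n (U i)" "unitary_mat n Or"
  shows "adaptive_state Or U k \<psi> \<bullet>c adaptive_state Or U k \<psi> = \<psi> \<bullet>c \<psi> \<and> adaptive_state Or U k \<psi> \<in> carrier_vec n"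
  using assms
proof (induct k)
  case 0 thus ?case by simp
next
  case (Suc k)
  have IH: "adaptive_state Or U k \<psi> \<bullet>c adaptive_state Or U k \<psi> = \<psi> \<bullet>c \<psi>" "adaptive_state Or U k \<psi> \<in> carrier_vec n"
    using Suc by auto
  have Uk: "unitary_mat n (U (Suc k))" using Suc.prems by auto
  have Oc: "Or \<in> carrier_mat n n" using Suc.prems by (simp add: unitary_mat_def)
  have Uc: "U (Suc k) \<in> carrier_mat n n" using Uk by (simp add: unitary_mat_def)
  have c1: "Or *\<^sub>v adaptive_state Or U k \<psi> \<in> carrier_vec n" using Oc IH by simp
  show ?case using unitary_norm[OF Uk c1] unitary_norm[OF Suc.prems(3) IH(2)] IH Uc c1 by simp
qed

lemma idx_div[simp]: "j < (D::nat) \<Longrightarrow> (x*D+j) div D = x"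
  by simp
lemma idx_mod[simp]: "j < (D::nat) \<Longrightarrow> (x*D+j) mod D = j"
  by simp

lemma rep_facts:
  fixes G :: "('g, 'b) monoid_scheme" (structure)
  assumes grp: "group G" and rep: "unitary_rep G d \<pi>"
  shows "\<pi> \<one>\<^bsub>G\<^esub> = 1\<^sub>m d" "\<And>a. a \<in> carrier G \<Longrightarrow> \<pi> (inv\<^bsub>G\<^esub> a) = adj (\<pi> a)"
proof -
  interpret group G by (rule grp)
  have u: "\<And>a. a \<in> carrier G \<Longrightarrow> unitary_mat d (\<pi> a)" and h: "\<And>a b. a \<in> carrier G \<Longrightarrow> b \<in> carrier G \<Longrightarrow> \<pi> (a \<otimes> b) = \<pi> a * \<pi> b"
    using rep by (auto simp: unitary_rep_def)
  have c: "\<And>a. a \<in> carrier G \<Longrightarrow> \<pi> a \<in> carrier_mat d d" using u by (simp add: unitary_mat_def)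
  have "\<pi> \<one> = \<pi> \<one> * \<pi> \<one>" using h[of \<one> \<one>] by simp
  hence "adj (\<pi> \<one>) * \<pi> \<one> = adj (\<pi> \<one>) * (\<pi> \<one> * \<pi> \<one>)" by simp
  also have "\<dots> = (adj (\<pi> \<one>) * \<pi> \<one>) * \<pi> \<one>" using c[of \<one>] by (simp add: assoc_mult_mat[of _ d d _ d _ d])
  finally show one: "\<pi> \<one> = 1\<^sub>m d" using u[of \<one>] c[of \<one>] by (simp add: unitary_mat_def)
  fix a assume a: "a \<in> carrier G"
  have "\<pi> a * \<pi> (inv a) = 1\<^sub>m d" using h[of a "inv a"] a one by simp
  hence "adj (\<pi> a) * (\<pi> a * \<pi> (inv a)) = adj (\<pi> a)" using right_mult_one_mat[OF adj_carrier[OF c[OF a]]] by simp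
  also have "adj (\<pi> a) * (\<pi> a * \<pi> (inv a)) = (adj (\<pi> a) * \<pi> a) * \<pi> (inv a)"
    using a c by (simp add: assoc_mult_mat[of _ d d _ d _ d])
  also have "\<dots> = \<pi> (inv a)" using u[OF a] left_mult_one_mat[OF c[OF inv_closed[OF a]]] by (simp add: unitary_mat_def)
  finally show "\<pi> (inv a) = adj (\<pi> a)" .
qed

locale hardsetup =
  fixes G :: "('g, 'b) monoid_scheme" (structure)
    and d N t :: nat and \<pi> :: "'g \<Rightarrow> complex mat" and U :: "nat \<Rightarrow> complex mat" and \<psi> :: "complex vec"
    and E :: "'x \<Rightarrow> complex mat" and X :: "'x set" and act :: "'g \<Rightarrow> 'x \<Rightarrow> 'x" and f :: "'g \<Rightarrow> 'x"
  assumes grp: "group G" and fin: "finite (carrier G)" and rep: "unitary_rep G d \<pi>"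
    and ci: "coset_identification G X act f"
    and N1: "N \<ge> 1" and psi: "unit_vec (d*N) \<psi>" and Uu: "\<forall>i\<in>{1..t}. unitary_mat (d*N) (U i)"
    and Ep: "povm (d*N) X E"
begin

sublocale group G by (rule grp)

abbreviation "nd \<equiv> d * N"
abbreviation "Dt \<equiv> d ^ t"
abbreviation "mt \<equiv> Dt * Dt"

definition "\<rho> a = tpow (\<pi> a) t"
definition "\<psi>a a = adaptive_state (kron (\<pi> a) (1\<^sub>m N)) U t \<psi>"
definition "w = wv d N U \<psi> t"
definition "Phi c = mat nd mt (\<lambda>(r,q). \<Sum>I<Dt. \<rho> (inv c) $$ (I, q div Dt) * (w (I, q mod Dt) $ r))"
definition "\<phi> = vec mt (\<lambda>q. if q div Dt = q mod Dt then 1 else (0::complex))"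
definition "R g = kron (\<rho> g) (1\<^sub>m Dt)"

lemma pi_unit: "a \<in> carrier G \<Longrightarrow> unitary_mat d (\<pi> a)" using rep by (simp add: unitary_rep_def)
lemma pi_car: "a \<in> carrier G \<Longrightarrow> \<pi> a \<in> carrier_mat d d" using pi_unit by (simp add: unitary_mat_def)
lemma pi_hom: "a \<in> carrier G \<Longrightarrow> b \<in> carrier G \<Longrightarrow> \<pi> (a \<otimes> b) = \<pi> a * \<pi> b" using rep by (simp add: unitary_rep_def)

lemma psi_car: "\<psi> \<in> carrier_vec nd" and psi_norm: "\<psi> \<bullet>c \<psi> = 1" using psi by (auto simp: unit_vec_def)

lemma d_pos: "d > 0"
proof (rule ccontr)
  assume "\<not> d > 0" hence "d = 0" by simp
  hence "\<psi> \<in> carrier_vec 0" using psi_car by simp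
  hence "\<psi> \<bullet>c \<psi> = 0" by (simp add: cscalar_sum[of _ 0])
  thus False using psi_norm by simp
qed

lemma D_pos: "Dt > 0" using d_pos by simp

lemma U_car: "\<forall>i\<in>{1..t}. U i \<in> carrier_mat nd nd" using Uu by (simp add: unitary_mat_def)

lemma rho_car: "a \<in> carrier G \<Longrightarrow> \<rho> a \<in> carrier_mat Dt Dt" unfolding \<rho>_def by (rule tpow_carrier[OF pi_car])
lemma rho_unit: "a \<in> carrier G \<Longrightarrow> unitary_mat Dt (\<rho> a)" unfolding \<rho>_def by (rule tpow_unitary[OF pi_unit])
lemma rho_hom: "a \<in> carrier G \<Longrightarrow> b \<in> carrier G \<Longrightarrow> \<rho> (a \<otimes> b) = \<rho> a * \<rho> b"
  unfolding \<rho>_def by (simp add: pi_hom tpow_mult[OF pi_car pi_car])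
lemma rho_inv: "a \<in> carrier G \<Longrightarrow> \<rho> (inv a) = adj (\<rho> a)"
  unfolding \<rho>_def by (simp add: rep_facts[OF grp rep] tpow_adj[OF pi_car])

lemma w_car: "w IJ \<in> carrier_vec nd" unfolding w_def by (rule wv_carrier[OF psi_car U_car])

lemma psia_expand: "a \<in> carrier G \<Longrightarrow> \<psi>a a = lc nd ({..<Dt}\<times>{..<Dt}) (\<lambda>(I,J). \<rho> a $$ (I,J)) w"
  unfolding \<psi>a_def w_def \<rho>_def by (rule adaptive_expand[OF pi_car psi_car U_car])

lemma psia_unit: "a \<in> carrier G \<Longrightarrow> \<psi>a a \<bullet>c \<psi>a a = 1 \<and> \<psi>a a \<in> carrier_vec nd"
  unfolding \<psi>a_def using adaptive_norm[OF psi_car Uu unitary_kron[OF pi_unit unitary_one]] psi_norm by simp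

lemma Phi_car: "Phi c \<in> carrier_mat nd mt" by (simp add: Phi_def)
lemma phi_car: "\<phi> \<in> carrier_vec mt" by (simp add: \<phi>_def)
lemma R_car: "g \<in> carrier G \<Longrightarrow> R g \<in> carrier_mat mt mt" unfolding R_def by (rule kron_carrier[OF rho_car one_carrier_mat])
lemma R_unit: "g \<in> carrier G \<Longrightarrow> unitary_mat mt (R g)" unfolding R_def by (rule unitary_kron[OF rho_unit unitary_one])
lemma R_inv: "g \<in> carrier G \<Longrightarrow> R (inv g) = adj (R g)"
  unfolding R_def by (simp add: rho_inv adj_kron[OF rho_car one_carrier_mat])

lemma Phi_phi: assumes c: "c \<in> carrier G" shows "Phi c *\<^sub>v \<phi> = \<psi>a (inv c)"
proof (rule eq_vecI)
  have ic: "inv c \<in> carrier G" using c by simp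
  fix r assume "r < dim_vec (\<psi>a (inv c))"
  hence r: "r < nd" using psia_unit[OF ic] unfolding carrier_vec_def by auto
  have "(Phi c *\<^sub>v \<phi>) $ r = (\<Sum>q<Dt*Dt. Phi c $$ (r,q) * \<phi> $ q)"
    by (rule mat_vec_entry[OF Phi_car phi_car r])
  also have "\<dots> = (\<Sum>K<Dt. \<Sum>J<Dt. Phi c $$ (r,K*Dt+J) * \<phi> $ (K*Dt+J))" by (rule sum_split_mult)
  also have "\<dots> = (\<Sum>K<Dt. \<Sum>J<Dt. if K = J then (\<Sum>I<Dt. \<rho> (inv c) $$ (I, J) * (w (I, J) $ r)) else 0)"
    using r by (intro sum.cong refl) (auto simp: Phi_def \<phi>_def idx_lt)
  also have "\<dots> = (\<Sum>J<Dt. \<Sum>I<Dt. \<rho> (inv c) $$ (I, J) * (w (I, J) $ r))"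
    by (simp add: sum.delta)
  also have "\<dots> = (\<Sum>x\<in>{..<Dt}\<times>{..<Dt}. (case x of (I,J) \<Rightarrow> \<rho> (inv c) $$ (I,J)) * (w x $ r))"
    by (subst sum.swap) (simp add: sum.cartesian_product split_def)
  also have "\<dots> = \<psi>a (inv c) $ r" using r by (simp add: psia_expand[OF ic] lc_index)
  finally show "(Phi c *\<^sub>v \<phi>) $ r = \<psi>a (inv c) $ r" .
qed (use psia_unit[of "inv c"] assms in \<open>auto simp: Phi_def\<close>)

lemma Phi_R: assumes c: "c \<in> carrier G" and g: "g \<in> carrier G"
  shows "Phi c * R g = Phi (inv g \<otimes> c)"
proof (rule eq_matI)
  fix r q assume "r < dim_row (Phi (inv g \<otimes> c))" "q < dim_col (Phi (inv g \<otimes> c))"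
  hence r: "r < nd" and q: "q < mt" by (auto simp: Phi_def)
  have qD: "q div Dt < Dt" "q mod Dt < Dt" using q D_pos by (auto simp: less_mult_imp_div_less)
  have ic: "inv c \<in> carrier G" using c by simp
  have "(Phi c * R g) $$ (r,q) = (\<Sum>q'<Dt*Dt. Phi c $$ (r,q') * R g $$ (q',q))"
    by (rule mat_mult_entry[OF Phi_car R_car[OF g] r q])
  also have "\<dots> = (\<Sum>K<Dt. \<Sum>J<Dt. Phi c $$ (r,K*Dt+J) * R g $$ (K*Dt+J,q))" by (rule sum_split_mult)
  also have "\<dots> = (\<Sum>K<Dt. \<Sum>J<Dt. if J = q mod Dt then Phi c $$ (r,K*Dt+ q mod Dt) * \<rho> g $$ (K, q div Dt) else 0)"
  proof (intro sum.cong refl)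
    fix K J assume K: "K \<in> {..<Dt}" and J: "J \<in> {..<Dt}"
    have "R g $$ (K*Dt+J,q) = \<rho> g $$ (K, q div Dt) * (if J = q mod Dt then 1 else 0)"
      unfolding R_def using K J q D_pos qD
      by (subst kron_index[OF rho_car[OF g] one_carrier_mat]) (auto simp: idx_lt)
    thus "Phi c $$ (r,K*Dt+J) * R g $$ (K*Dt+J,q) = (if J = q mod Dt then Phi c $$ (r,K*Dt+ q mod Dt) * \<rho> g $$ (K, q div Dt) else 0)"
      by auto
  qed
  also have "\<dots> = (\<Sum>K<Dt. Phi c $$ (r,K*Dt+ q mod Dt) * \<rho> g $$ (K, q div Dt))"
    using qD by (simp add: sum.delta')
  also have "\<dots> = (\<Sum>K<Dt. \<Sum>I<Dt. \<rho> (inv c) $$ (I, K) * (w (I, q mod Dt) $ r) * \<rho> g $$ (K, q div Dt))"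
    using r qD by (intro sum.cong refl) (auto simp: Phi_def idx_lt sum_distrib_right)
  also have "\<dots> = (\<Sum>I<Dt. (\<Sum>K<Dt. \<rho> (inv c) $$ (I, K) * \<rho> g $$ (K, q div Dt)) * (w (I, q mod Dt) $ r))"
    by (subst sum.swap) (simp add: sum_distrib_left sum_distrib_right mult_ac)
  also have "\<dots> = (\<Sum>I<Dt. (\<rho> (inv c) * \<rho> g) $$ (I, q div Dt) * (w (I, q mod Dt) $ r))"
    using qD by (intro sum.cong refl) (simp add: mat_mult_entry[OF rho_car[OF ic] rho_car[OF g]])
  also have "\<rho> (inv c) * \<rho> g = \<rho> (inv (inv g \<otimes> c))"
    using c g by (simp add: rho_hom inv_mult_group)
  also have "(\<Sum>I<Dt. \<rho> (inv (inv g \<otimes> c)) $$ (I, q div Dt) * (w (I, q mod Dt) $ r)) = Phi (inv g \<otimes> c) $$ (r,q)"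
    using r q by (simp add: Phi_def)
  finally show "(Phi c * R g) $$ (r,q) = Phi (inv g \<otimes> c) $$ (r,q)" .
qed (use R_car[OF g] in \<open>auto simp: Phi_def\<close>)

lemma Phi_R_phi: assumes c: "c \<in> carrier G" and b: "b \<in> carrier G"
  shows "Phi c *\<^sub>v (R b *\<^sub>v \<phi>) = \<psi>a (inv c \<otimes> b)"
proof -
  have "Phi c *\<^sub>v (R b *\<^sub>v \<phi>) = (Phi c * R b) *\<^sub>v \<phi>"
    by (rule assoc_mult_mat_vec[symmetric, OF Phi_car R_car[OF b] phi_car])
  also have "\<dots> = \<psi>a (inv (inv b \<otimes> c))" using c b by (simp add: Phi_R Phi_phi)
  also have "inv (inv b \<otimes> c) = inv c \<otimes> b" using c b by (simp add: inv_mult_group)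
  finally show ?thesis .
qed

end


lemma zero_mat_vec: "v \<in> carrier_vec m \<Longrightarrow> (0\<^sub>m n m :: complex mat) *\<^sub>v v = 0\<^sub>v n"
  by (intro eq_vecI) (auto simp: mat_vec_entry[of _ n m])

lemma fc_zero: assumes "U \<in> carrier_mat n n" shows "fc U n (\<lambda>_. 0) = 0\<^sub>m n n"
  by (rule eq_matI) (use assms fc_dims[OF assms] in \<open>auto simp: fc_entry\<close>)

context hardsetup begin

lemma cardG: "card (carrier G) > 0" using fin by (auto simp: card_gt_0_iff)

definition "Q = avgm (carrier G) (\<lambda>c. adj (Phi c) * Phi c) mt mt"

lemma PP_car: "adj (Phi c) * Phi c \<in> carrier_mat mt mt"
  by (rule mult_carrier_mat[OF adj_carrier[OF Phi_car] Phi_car])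

lemma Q_car: "Q \<in> carrier_mat mt mt" by (simp add: Q_def)

lemma Q_herm: "adj Q = Q"
  unfolding Q_def
  by (subst adj_avgm, rule PP_car, rule avgm_cong, simp add: adj_mult[OF adj_carrier[OF Phi_car] Phi_car])

lemma PP_vec: "v \<in> carrier_vec mt \<Longrightarrow> (adj (Phi c) * Phi c *\<^sub>v v) \<bullet>c v = (Phi c *\<^sub>v v) \<bullet>c (Phi c *\<^sub>v v)"
proof -
  assume v: "v \<in> carrier_vec mt"
  have "adj (Phi c) * Phi c *\<^sub>v v = adj (Phi c) *\<^sub>v (Phi c *\<^sub>v v)"
    by (rule assoc_mult_mat_vec[OF adj_carrier[OF Phi_car] Phi_car v])
  thus ?thesis using adj_vec[OF Phi_car mult_mat_vec_carrier[OF Phi_car v] v] by simp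
qed

lemma Q_quad: "v \<in> carrier_vec mt \<Longrightarrow> (Q *\<^sub>v v) \<bullet>c v = (\<Sum>c\<in>carrier G. (Phi c *\<^sub>v v) \<bullet>c (Phi c *\<^sub>v v)) / of_nat (card (carrier G))"
  unfolding Q_def by (simp add: avgm_quad[OF PP_car] PP_vec)

lemma Q_psd: "v \<in> carrier_vec mt \<Longrightarrow> Im ((Q *\<^sub>v v) \<bullet>c v) = 0 \<and> Re ((Q *\<^sub>v v) \<bullet>c v) \<ge> 0"
proof -
  assume v: "v \<in> carrier_vec mt"
  have t: "Im ((Phi c *\<^sub>v v) \<bullet>c (Phi c *\<^sub>v v)) = 0 \<and> Re ((Phi c *\<^sub>v v) \<bullet>c (Phi c *\<^sub>v v)) \<ge> 0" for c
    using conjugate_square_ge_0_vec[of "Phi c *\<^sub>v v"] by (simp add: less_eq_complex_def)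
  have "Im (\<Sum>c\<in>carrier G. (Phi c *\<^sub>v v) \<bullet>c (Phi c *\<^sub>v v)) = 0" using t by (simp add: Im_sum)
  moreover have "Re (\<Sum>c\<in>carrier G. (Phi c *\<^sub>v v) \<bullet>c (Phi c *\<^sub>v v)) \<ge> 0" using t by (simp add: Re_sum sum_nonneg)
  ultimately show ?thesis unfolding Q_quad[OF v] by (simp add: Re_divide_of_nat Im_divide_of_nat)
qed

lemma Q_comm: assumes g: "g \<in> carrier G" shows "R g * Q = Q * R g"
proof -
  let ?H = "\<lambda>c. adj (Phi c) * Phi (inv g \<otimes> c)"
  have "Q * R g = avgm (carrier G) (\<lambda>c. adj (Phi c) * Phi c * R g) mt mt"
    unfolding Q_def by (rule mult_avgm_right[OF R_car[OF g] PP_car])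
  also have "\<dots> = avgm (carrier G) ?H mt mt"
  proof (rule avgm_cong)
    fix c assume c: "c \<in> carrier G"
    have "adj (Phi c) * Phi c * R g = adj (Phi c) * (Phi c * R g)"
      by (rule assoc_mult_mat[OF adj_carrier[OF Phi_car] Phi_car R_car[OF g]])
    thus "adj (Phi c) * Phi c * R g = ?H c" using Phi_R[OF c g] by simp
  qed
  finally have 1: "Q * R g = avgm (carrier G) ?H mt mt" .
  have "R g * Q = avgm (carrier G) (\<lambda>c. R g * (adj (Phi c) * Phi c)) mt mt"
    unfolding Q_def by (rule mult_avgm_left[OF R_car[OF g] PP_car])
  also have "\<dots> = avgm (carrier G) (\<lambda>c. ?H (g \<otimes> c)) mt mt"
  proof (rule avgm_cong)
    fix c assume c: "c \<in> carrier G"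
    have ig: "inv g \<in> carrier G" using g by simp
    have "R g * (adj (Phi c) * Phi c) = (R g * adj (Phi c)) * Phi c"
      by (rule assoc_mult_mat[symmetric, OF R_car[OF g] adj_carrier[OF Phi_car] Phi_car])
    also have "R g * adj (Phi c) = adj (Phi c * adj (R g))"
      by (simp add: adj_mult[OF Phi_car adj_carrier[OF R_car[OF g]]])
    also have "adj (R g) = R (inv g)" using R_inv[OF g] by simp
    also have "Phi c * R (inv g) = Phi (g \<otimes> c)" using Phi_R[OF c ig] g by simp
    finally have "R g * (adj (Phi c) * Phi c) = adj (Phi (g \<otimes> c)) * Phi c" .
    moreover have "inv g \<otimes> (g \<otimes> c) = c" using g c by (simp add: m_assoc[symmetric])
    ultimately show "R g * (adj (Phi c) * Phi c) = ?H (g \<otimes> c)" by simp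
  qed
  also have "\<dots> = avgm (carrier G) ?H mt mt" by (rule avgm_reindex[OF bij_lmult[OF g]])
  finally show ?thesis using 1 by simp
qed

definition "UD = (SOME p. unitary_mat mt (fst p) \<and> Q = fc (fst p) mt (\<lambda>i. complex_of_real (snd p i)))"
definition "U0 = fst UD"
definition "d0 = snd UD"

lemma spec: "unitary_mat mt U0 \<and> Q = fc U0 mt (\<lambda>i. complex_of_real (d0 i))"
proof -
  obtain U' d' where "unitary_mat mt U' \<and> Q = U' * dmat mt (\<lambda>i. complex_of_real (d' i)) * adj U'"
    using spectral[OF Q_car Q_herm] by blast
  hence ex: "\<exists>p. unitary_mat mt (fst p) \<and> Q = fc (fst p) mt (\<lambda>i. complex_of_real (snd p i))"
    by (intro exI[of _ "(U', d')"]) (simp add: fc_def)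
  show ?thesis unfolding U0_def d0_def UD_def by (rule someI_ex[OF ex])
qed

lemma U0u: "unitary_mat mt U0" using spec by simp
lemma U0c: "U0 \<in> carrier_mat mt mt" using U0u by (simp add: unitary_mat_def)
lemma Q_fc: "Q = fc U0 mt (\<lambda>i. complex_of_real (d0 i))" using spec by simp

lemma d0_nonneg: "i < mt \<Longrightarrow> d0 i \<ge> 0"
  by (rule fc_psd_eig[OF U0u]) (use Q_psd in \<open>auto simp: Q_fc[symmetric]\<close>)

definition "T = fc U0 mt (\<lambda>i. complex_of_real (sqrt (d0 i)))"
definition "S = fc U0 mt (\<lambda>i. if d0 i > 0 then complex_of_real (1 / sqrt (d0 i)) else 0)"
definition "Pr = fc U0 mt (\<lambda>i. if d0 i > 0 then 1 else 0)"
definition "IP = fc U0 mt (\<lambda>i. if d0 i > 0 then 0 else 1)"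

lemma T_car: "T \<in> carrier_mat mt mt" by (simp add: T_def U0c)
lemma S_car: "S \<in> carrier_mat mt mt" by (simp add: S_def U0c)
lemma Pi_car: "Pr \<in> carrier_mat mt mt" by (simp add: Pr_def U0c)
lemma IP_car: "IP \<in> carrier_mat mt mt" by (simp add: IP_def U0c)

lemma T_herm: "adj T = T" unfolding T_def fc_adj[OF U0c] by simp
lemma S_herm: "adj S = S" unfolding S_def fc_adj[OF U0c] by (rule fc_cong) auto

lemma TT: "T * T = Q"
  unfolding T_def fc_mult[OF U0u] Q_fc
  by (rule fc_cong) (simp add: d0_nonneg of_real_mult[symmetric] del: of_real_mult)

lemma ST: "S * T = Pr"
  unfolding T_def S_def Pr_def fc_mult[OF U0u]
  by (rule fc_cong) (auto simp: of_real_mult[symmetric] simp del: of_real_mult)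

lemma SQS: "S * Q * S = Pr"
  unfolding S_def Pr_def Q_fc fc_mult[OF U0u]
proof (rule fc_cong)
  fix i assume i: "i < mt"
  show "(if 0 < d0 i then complex_of_real (1 / sqrt (d0 i)) else 0) * complex_of_real (d0 i) *
      (if 0 < d0 i then complex_of_real (1 / sqrt (d0 i)) else 0) = (if 0 < d0 i then 1 else 0)"
  proof (cases "d0 i > 0")
    case True
    have "complex_of_real (1 / sqrt (d0 i)) * complex_of_real (d0 i) * complex_of_real (1 / sqrt (d0 i))
       = complex_of_real (1 / sqrt (d0 i) * d0 i * (1 / sqrt (d0 i)))" by (simp only: of_real_mult)
    also have "1 / sqrt (d0 i) * d0 i * (1 / sqrt (d0 i)) = d0 i / (sqrt (d0 i) * sqrt (d0 i))"
      by (simp add: field_simps)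
    also have "sqrt (d0 i) * sqrt (d0 i) = d0 i" using True by simp
    also have "d0 i / d0 i = 1" using True by simp
    finally show ?thesis using True by simp
  qed simp
qed

lemma Pi_IP: "Pr + IP = 1\<^sub>m mt"
  unfolding Pr_def IP_def fc_add[OF U0c] fc_one[OF U0u, symmetric] by (rule fc_cong) auto

lemma IPT: "IP * T = 0\<^sub>m mt mt"
  unfolding IP_def T_def fc_mult[OF U0u] fc_zero[OF U0c, symmetric]
proof (rule fc_cong)
  fix i assume "i < mt"
  hence "d0 i > 0 \<or> d0 i = 0" using d0_nonneg[of i] by linarith
  thus "(if 0 < d0 i then 0 else 1) * complex_of_real (sqrt (d0 i)) = 0" by auto
qed

lemma QIP: "Q * IP = 0\<^sub>m mt mt"
  unfolding IP_def Q_fc fc_mult[OF U0u] fc_zero[OF U0c, symmetric]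
proof (rule fc_cong)
  fix i assume "i < mt"
  hence "d0 i > 0 \<or> d0 i = 0" using d0_nonneg[of i] by linarith
  thus "complex_of_real (d0 i) * (if 0 < d0 i then 0 else 1) = 0" by auto
qed

lemma T_comm: "g \<in> carrier G \<Longrightarrow> R g * T = T * R g"
  unfolding T_def
  by (rule fc_comm[OF U0u R_car, of g d0 "\<lambda>x. complex_of_real (sqrt x)"]) (use Q_comm Q_fc in auto)

lemma IP_psd: "v \<in> carrier_vec mt \<Longrightarrow> Im ((IP *\<^sub>v v) \<bullet>c v) = 0 \<and> Re ((IP *\<^sub>v v) \<bullet>c v) \<ge> 0"
  unfolding IP_def by (rule fc_psd[OF U0c]) auto

lemma Phi_IP: assumes c: "c \<in> carrier G" and v: "v \<in> carrier_vec mt"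
  shows "Phi c *\<^sub>v (IP *\<^sub>v v) = 0\<^sub>v nd"
proof -
  let ?y = "IP *\<^sub>v v"
  have y: "?y \<in> carrier_vec mt" by (rule mult_mat_vec_carrier[OF IP_car v])
  have "Q *\<^sub>v ?y = (Q * IP) *\<^sub>v v" by (rule assoc_mult_mat_vec[symmetric, OF Q_car IP_car v])
  also have "\<dots> = 0\<^sub>v mt" using v by (simp add: QIP zero_mat_vec)
  finally have "(Q *\<^sub>v ?y) \<bullet>c ?y = 0" using y by simp
  hence "(\<Sum>c\<in>carrier G. (Phi c *\<^sub>v ?y) \<bullet>c (Phi c *\<^sub>v ?y)) = 0"
    using Q_quad[OF y] cardG by simp
  hence "\<forall>c\<in>carrier G. (Phi c *\<^sub>v ?y) \<bullet>c (Phi c *\<^sub>v ?y) = 0"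
    using sum_nonneg_eq_0_iff[OF fin, of "\<lambda>c. (Phi c *\<^sub>v ?y) \<bullet>c (Phi c *\<^sub>v ?y)"] conjugate_square_ge_0_vec
    by blast
  hence "(Phi c *\<^sub>v ?y) \<bullet>c (Phi c *\<^sub>v ?y) = 0" using c by blast
  thus ?thesis using conjugate_square_eq_0_vec[OF mult_mat_vec_carrier[OF Phi_car y]] by simp
qed

end


lemma triple_entry:
  assumes A: "A \<in> carrier_mat a b" and B: "B \<in> carrier_mat b c" and C: "C \<in> carrier_mat c e"
    and i: "i < a" and j: "j < e"
  shows "(A * B * C) $$ (i,j) = (\<Sum>k<b. \<Sum>l<c. A $$ (i,k) * B $$ (k,l) * C $$ (l,j))"
proof -
  have "(A * B * C) $$ (i,j) = (\<Sum>l<c. (A * B) $$ (i,l) * C $$ (l,j))"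
    by (rule mat_mult_entry[OF mult_carrier_mat[OF A B] C i j])
  also have "\<dots> = (\<Sum>l<c. (\<Sum>k<b. A $$ (i,k) * B $$ (k,l)) * C $$ (l,j))"
    by (intro sum.cong refl) (simp add: mat_mult_entry[OF A B i])
  also have "\<dots> = (\<Sum>k<b. \<Sum>l<c. A $$ (i,k) * B $$ (k,l) * C $$ (l,j))"
    by (simp add: sum_distrib_right sum.swap[of _ "{..<c}"])
  finally show ?thesis .
qed

lemma cscalar_add_left: "(v :: complex vec) \<in> carrier_vec n \<Longrightarrow> w \<in> carrier_vec n \<Longrightarrow> u \<in> carrier_vec n \<Longrightarrow>
   (v + w) \<bullet>c u = v \<bullet>c u + w \<bullet>c u"
  by (simp add: cscalar_sum[of _ n] distrib_right sum.distrib)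

lemma cscalar_add_right: "(v :: complex vec) \<in> carrier_vec n \<Longrightarrow> w \<in> carrier_vec n \<Longrightarrow> u \<in> carrier_vec n \<Longrightarrow>
   u \<bullet>c (v + w) = u \<bullet>c v + u \<bullet>c w"
  by (simp add: cscalar_sum[of _ n] distrib_left sum.distrib)

lemma mat_vec_zero: "A \<in> carrier_mat n m \<Longrightarrow> A *\<^sub>v 0\<^sub>v m = (0\<^sub>v n :: complex vec)"
  by (intro eq_vecI) (auto simp: mat_vec_entry)

lemma cscalar_zero_right: "(v :: complex vec) \<in> carrier_vec n \<Longrightarrow> v \<bullet>c 0\<^sub>v n = 0"
  by (simp add: cscalar_sum[of _ n])

lemma herm_vec: "A \<in> carrier_mat n n \<Longrightarrow> adj A = A \<Longrightarrow> x \<in> carrier_vec n \<Longrightarrow> y \<in> carrier_vec n \<Longrightarrow>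
   (A *\<^sub>v x) \<bullet>c y = x \<bullet>c (A *\<^sub>v y)"
  using adj_vec[of A n n x y] by simp

context hardsetup begin

lemma act_closed: "g \<in> carrier G \<Longrightarrow> x \<in> X \<Longrightarrow> act g x \<in> X" using ci by (simp add: coset_identification_def)
lemma act_one: "x \<in> X \<Longrightarrow> act \<one> x = x" using ci by (simp add: coset_identification_def)
lemma act_mult: "g \<in> carrier G \<Longrightarrow> h \<in> carrier G \<Longrightarrow> x \<in> X \<Longrightarrow> act (g \<otimes> h) x = act g (act h x)"
  using ci by (simp add: coset_identification_def)
lemma f_img: "f ` carrier G = X" using ci by (simp add: coset_identification_def)
lemma f_eq: "g \<in> carrier G \<Longrightarrow> h \<in> carrier G \<Longrightarrow> f (g \<otimes> h) = act g (f h)"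
  using ci by (simp add: coset_identification_def)

lemma X_fin: "finite X" using f_img fin by auto
lemma X_card: "card X > 0"
proof -
  have "f \<one> \<in> X" using f_img by auto
  thus ?thesis using X_fin by (auto simp: card_gt_0_iff)
qed

lemma bij_act: "g \<in> carrier G \<Longrightarrow> bij_betw (act g) X X"
  by (rule bij_betwI[where g = "act (inv g)"])
     (auto simp: act_closed act_mult[symmetric] act_one)

lemma E_psd: "x \<in> X \<Longrightarrow> psd nd (E x)" using Ep by (simp add: povm_def)
lemma E_car: "x \<in> X \<Longrightarrow> E x \<in> carrier_mat nd nd" using E_psd by (simp add: psd_def)
lemma E_sum: "i < nd \<Longrightarrow> j < nd \<Longrightarrow> (\<Sum>x\<in>X. E x $$ (i,j)) = 1\<^sub>m nd $$ (i,j)"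
  using Ep by (simp add: povm_def)

definition "M x = avgm (carrier G) (\<lambda>c. adj (Phi c) * E (act (inv c) x) * Phi c) mt mt"
definition "E2 x = S * M x * S + (1 / of_nat (card X)) \<cdot>\<^sub>m IP"

lemma EX: "c \<in> carrier G \<Longrightarrow> x \<in> X \<Longrightarrow> E (act (inv c) x) \<in> carrier_mat nd nd"
  by (rule E_car[OF act_closed]) auto

lemma PEP_car: "c \<in> carrier G \<Longrightarrow> x \<in> X \<Longrightarrow> adj (Phi c) * E (act (inv c) x) * Phi c \<in> carrier_mat mt mt"
  by (rule mult_carrier_mat[OF mult_carrier_mat[OF adj_carrier[OF Phi_car] EX] Phi_car])

lemma M_car: "M x \<in> carrier_mat mt mt" by (simp add: M_def)

lemma PEP_vec: assumes c: "c \<in> carrier G" and x: "x \<in> X" and v: "v \<in> carrier_vec mt"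
  shows "adj (Phi c) * E (act (inv c) x) * Phi c *\<^sub>v v = adj (Phi c) *\<^sub>v (E (act (inv c) x) *\<^sub>v (Phi c *\<^sub>v v))"
proof -
  have "adj (Phi c) * E (act (inv c) x) * Phi c *\<^sub>v v = adj (Phi c) * E (act (inv c) x) *\<^sub>v (Phi c *\<^sub>v v)"
    by (rule assoc_mult_mat_vec[OF mult_carrier_mat[OF adj_carrier[OF Phi_car] EX[OF c x]] Phi_car v])
  also have "\<dots> = adj (Phi c) *\<^sub>v (E (act (inv c) x) *\<^sub>v (Phi c *\<^sub>v v))"
    by (rule assoc_mult_mat_vec[OF adj_carrier[OF Phi_car] EX[OF c x] mult_mat_vec_carrier[OF Phi_car v]])
  finally show ?thesis .
qed

lemma M_quad: assumes x: "x \<in> X" and v: "v \<in> carrier_vec mt" and z: "z \<in> carrier_vec mt"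
  shows "(M x *\<^sub>v v) \<bullet>c z = (\<Sum>c\<in>carrier G. (E (act (inv c) x) *\<^sub>v (Phi c *\<^sub>v v)) \<bullet>c (Phi c *\<^sub>v z)) / of_nat (card (carrier G))"
proof -
  have "(M x *\<^sub>v v) \<bullet>c z = (\<Sum>c\<in>carrier G. (adj (Phi c) * E (act (inv c) x) * Phi c *\<^sub>v v) \<bullet>c z) / of_nat (card (carrier G))"
    unfolding M_def by (rule avgm_quad[OF PEP_car[OF _ x] v z])
  also have "\<dots> = (\<Sum>c\<in>carrier G. (E (act (inv c) x) *\<^sub>v (Phi c *\<^sub>v v)) \<bullet>c (Phi c *\<^sub>v z)) / of_nat (card (carrier G))"
  proof (intro arg_cong[where f = "\<lambda>z. z / _"] sum.cong refl)
    fix c assume c: "c \<in> carrier G"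
    show "(adj (Phi c) * E (act (inv c) x) * Phi c *\<^sub>v v) \<bullet>c z = (E (act (inv c) x) *\<^sub>v (Phi c *\<^sub>v v)) \<bullet>c (Phi c *\<^sub>v z)"
      unfolding PEP_vec[OF c x v]
      by (rule adj_vec[OF Phi_car mult_mat_vec_carrier[OF EX[OF c x] mult_mat_vec_carrier[OF Phi_car v]] z])
  qed
  finally show ?thesis .
qed

lemma M_psd: assumes x: "x \<in> X" and v: "v \<in> carrier_vec mt"
  shows "Im ((M x *\<^sub>v v) \<bullet>c v) = 0 \<and> Re ((M x *\<^sub>v v) \<bullet>c v) \<ge> 0"
proof -
  have t: "Im ((E (act (inv c) x) *\<^sub>v (Phi c *\<^sub>v v)) \<bullet>c (Phi c *\<^sub>v v)) = 0 \<and> Re ((E (act (inv c) x) *\<^sub>v (Phi c *\<^sub>v v)) \<bullet>c (Phi c *\<^sub>v v)) \<ge> 0"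
    if c: "c \<in> carrier G" for c
    using E_psd[OF act_closed[OF inv_closed[OF c] x]] mult_mat_vec_carrier[OF Phi_car v] by (simp add: psd_def)
  have "Im (\<Sum>c\<in>carrier G. (E (act (inv c) x) *\<^sub>v (Phi c *\<^sub>v v)) \<bullet>c (Phi c *\<^sub>v v)) = 0" using t by (simp add: Im_sum)
  moreover have "Re (\<Sum>c\<in>carrier G. (E (act (inv c) x) *\<^sub>v (Phi c *\<^sub>v v)) \<bullet>c (Phi c *\<^sub>v v)) \<ge> 0" using t by (simp add: Re_sum sum_nonneg)
  ultimately show ?thesis unfolding M_quad[OF x v v] by (simp add: Re_divide_of_nat Im_divide_of_nat)
qed

lemma M_IP_right: assumes x: "x \<in> X" and v: "v \<in> carrier_vec mt" and z: "z \<in> carrier_vec mt"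
  shows "(M x *\<^sub>v v) \<bullet>c (IP *\<^sub>v z) = 0"
  unfolding M_quad[OF x v mult_mat_vec_carrier[OF IP_car z]]
proof -
  have "(E (act (inv c) x) *\<^sub>v (Phi c *\<^sub>v v)) \<bullet>c (Phi c *\<^sub>v (IP *\<^sub>v z)) = 0" if c: "c \<in> carrier G" for c
    unfolding Phi_IP[OF c z]
    by (rule cscalar_zero_right, rule mult_mat_vec_carrier[OF EX[OF c x] mult_mat_vec_carrier[OF Phi_car v]])
  thus "(\<Sum>c\<in>carrier G. (E (act (inv c) x) *\<^sub>v (Phi c *\<^sub>v v)) \<bullet>c (Phi c *\<^sub>v (IP *\<^sub>v z))) / of_nat (card (carrier G)) = 0"
    by simp
qed

lemma M_IP_left: assumes x: "x \<in> X" and v: "v \<in> carrier_vec mt"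
  shows "M x *\<^sub>v (IP *\<^sub>v v) = 0\<^sub>v mt"
proof -
  have y: "IP *\<^sub>v v \<in> carrier_vec mt" by (rule mult_mat_vec_carrier[OF IP_car v])
  have z: "(adj (Phi c) * E (act (inv c) x) * Phi c *\<^sub>v (IP *\<^sub>v v)) = 0\<^sub>v mt" if c: "c \<in> carrier G" for c
    unfolding PEP_vec[OF c x y] Phi_IP[OF c v]
    using mat_vec_zero[OF EX[OF c x]] mat_vec_zero[OF adj_carrier[OF Phi_car]] by simp
  have "M x *\<^sub>v (IP *\<^sub>v v) = vec mt (\<lambda>i. (\<Sum>c\<in>carrier G. (adj (Phi c) * E (act (inv c) x) * Phi c *\<^sub>v (IP *\<^sub>v v)) $ i) / of_nat (card (carrier G)))"
    unfolding M_def by (rule avgm_mult_vec[OF PEP_car[OF _ x] y])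
  also have "\<dots> = 0\<^sub>v mt" by (rule eq_vecI) (auto simp: z)
  finally show ?thesis .
qed

end


lemma smult_mat_vec: "A \<in> carrier_mat n m \<Longrightarrow> v \<in> carrier_vec m \<Longrightarrow> (c \<cdot>\<^sub>m A) *\<^sub>v v = c \<cdot>\<^sub>v (A *\<^sub>v (v :: complex vec))"
  by (intro eq_vecI) (auto simp: mat_vec_entry[of _ n m] sum_distrib_left mult.assoc)

context hardsetup begin

definition "phi2 = T *\<^sub>v \<phi>"

lemma phi2_car: "phi2 \<in> carrier_vec mt" unfolding phi2_def by (rule mult_mat_vec_carrier[OF T_car phi_car])

lemma phi2_unit: "phi2 \<bullet>c phi2 = 1"
proof -
  have "phi2 \<bullet>c phi2 = (T *\<^sub>v phi2) \<bullet>c \<phi>"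
    unfolding phi2_def by (rule herm_vec[OF T_car T_herm phi2_car[unfolded phi2_def] phi_car, symmetric])
  also have "T *\<^sub>v phi2 = Q *\<^sub>v \<phi>"
    unfolding phi2_def TT[symmetric] by (rule assoc_mult_mat_vec[symmetric, OF T_car T_car phi_car])
  also have "(Q *\<^sub>v \<phi>) \<bullet>c \<phi> = (\<Sum>c\<in>carrier G. (Phi c *\<^sub>v \<phi>) \<bullet>c (Phi c *\<^sub>v \<phi>)) / of_nat (card (carrier G))"
    by (rule Q_quad[OF phi_car])
  also have "\<dots> = (\<Sum>c\<in>carrier G. 1) / of_nat (card (carrier G))"
    by (intro arg_cong[where f = "\<lambda>z. z / _"] sum.cong refl) (simp add: Phi_phi psia_unit)
  also have "\<dots> = 1" using cardG by simp
  finally show ?thesis .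
qed

definition "Fv g = (E (f g) *\<^sub>v \<psi>a g) \<bullet>c \<psi>a g"

lemma f_X: "g \<in> carrier G \<Longrightarrow> f g \<in> X" using f_img by auto

lemma success_b: assumes b: "b \<in> carrier G"
  shows "(E2 (f b) *\<^sub>v (R b *\<^sub>v phi2)) \<bullet>c (R b *\<^sub>v phi2) = (\<Sum>g\<in>carrier G. Fv g) / of_nat (card (carrier G))"
proof -
  define u where "u = R b *\<^sub>v \<phi>"
  have u: "u \<in> carrier_vec mt" unfolding u_def by (rule mult_mat_vec_carrier[OF R_car[OF b] phi_car])
  let ?x = "f b"
  have x: "?x \<in> X" by (rule f_X[OF b])
  have Tu: "T *\<^sub>v u \<in> carrier_vec mt" by (rule mult_mat_vec_carrier[OF T_car u])
  have Ru: "R b *\<^sub>v phi2 = T *\<^sub>v u"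
  proof -
    have "R b *\<^sub>v phi2 = (R b * T) *\<^sub>v \<phi>" unfolding phi2_def
      by (rule assoc_mult_mat_vec[symmetric, OF R_car[OF b] T_car phi_car])
    also have "\<dots> = (T * R b) *\<^sub>v \<phi>" using T_comm[OF b] by simp
    also have "\<dots> = T *\<^sub>v u" unfolding u_def by (rule assoc_mult_mat_vec[OF T_car R_car[OF b] phi_car])
    finally show ?thesis .
  qed
  have SMS: "S * M ?x * S \<in> carrier_mat mt mt" by (rule mult_carrier_mat[OF mult_carrier_mat[OF S_car M_car] S_car])
  have cIP: "(1 / of_nat (card X)) \<cdot>\<^sub>m IP \<in> carrier_mat mt mt" using IP_car by simp
  have IPTu: "IP *\<^sub>v (T *\<^sub>v u) = 0\<^sub>v mt"
    using assoc_mult_mat_vec[OF IP_car T_car u] IPT zero_mat_vec[OF u] by simp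
  have STu: "S *\<^sub>v (T *\<^sub>v u) = Pr *\<^sub>v u"
    using assoc_mult_mat_vec[OF S_car T_car u] ST by simp
  have Pru: "Pr *\<^sub>v u + IP *\<^sub>v u = u"
    using add_mult_distrib_mat_vec[OF Pi_car IP_car u] Pi_IP u by simp
  have MPr: "M ?x *\<^sub>v (Pr *\<^sub>v u) = M ?x *\<^sub>v u"
  proof -
    have "M ?x *\<^sub>v u = M ?x *\<^sub>v (Pr *\<^sub>v u) + M ?x *\<^sub>v (IP *\<^sub>v u)"
      using mult_add_distrib_mat_vec[OF M_car mult_mat_vec_carrier[OF Pi_car u] mult_mat_vec_carrier[OF IP_car u]] Pru
      by simp
    also have "M ?x *\<^sub>v (IP *\<^sub>v u) = 0\<^sub>v mt" by (rule M_IP_left[OF x u])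
    finally show ?thesis using mult_mat_vec_carrier[OF M_car mult_mat_vec_carrier[OF Pi_car u]] by simp
  qed
  have Mu: "M ?x *\<^sub>v u \<in> carrier_vec mt" by (rule mult_mat_vec_carrier[OF M_car u])
  have E2Tu: "E2 ?x *\<^sub>v (T *\<^sub>v u) = S *\<^sub>v (M ?x *\<^sub>v u)"
  proof -
    have "E2 ?x *\<^sub>v (T *\<^sub>v u) = (S * M ?x * S) *\<^sub>v (T *\<^sub>v u) + ((1 / of_nat (card X)) \<cdot>\<^sub>m IP) *\<^sub>v (T *\<^sub>v u)"
      unfolding E2_def by (rule add_mult_distrib_mat_vec[OF SMS cIP Tu])
    also have "((1 / of_nat (card X)) \<cdot>\<^sub>m IP) *\<^sub>v (T *\<^sub>v u) = 0\<^sub>v mt"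
      using smult_mat_vec[OF IP_car Tu] IPTu by (auto intro!: eq_vecI)
    also have "(S * M ?x * S) *\<^sub>v (T *\<^sub>v u) = S *\<^sub>v (M ?x *\<^sub>v (S *\<^sub>v (T *\<^sub>v u)))"
      using assoc_mult_mat_vec[OF mult_carrier_mat[OF S_car M_car] S_car Tu]
        assoc_mult_mat_vec[OF S_car M_car mult_mat_vec_carrier[OF S_car Tu]] by simp
    finally show ?thesis using STu MPr mult_mat_vec_carrier[OF S_car Mu] by simp
  qed
  have "(E2 ?x *\<^sub>v (R b *\<^sub>v phi2)) \<bullet>c (R b *\<^sub>v phi2) = (S *\<^sub>v (M ?x *\<^sub>v u)) \<bullet>c (T *\<^sub>v u)"
    unfolding Ru E2Tu ..
  also have "\<dots> = (M ?x *\<^sub>v u) \<bullet>c (S *\<^sub>v (T *\<^sub>v u))" by (rule herm_vec[OF S_car S_herm Mu Tu])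
  also have "\<dots> = (M ?x *\<^sub>v u) \<bullet>c (Pr *\<^sub>v u)" unfolding STu ..
  also have "\<dots> = (M ?x *\<^sub>v u) \<bullet>c u"
  proof -
    have "(M ?x *\<^sub>v u) \<bullet>c u = (M ?x *\<^sub>v u) \<bullet>c (Pr *\<^sub>v u) + (M ?x *\<^sub>v u) \<bullet>c (IP *\<^sub>v u)"
      using cscalar_add_right[OF mult_mat_vec_carrier[OF Pi_car u] mult_mat_vec_carrier[OF IP_car u] Mu] Pru by simp
    thus ?thesis using M_IP_right[OF x u u] by simp
  qed
  also have "\<dots> = (\<Sum>c\<in>carrier G. (E (act (inv c) ?x) *\<^sub>v (Phi c *\<^sub>v u)) \<bullet>c (Phi c *\<^sub>v u)) / of_nat (card (carrier G))"
    by (rule M_quad[OF x u u])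
  also have "\<dots> = (\<Sum>c\<in>carrier G. Fv (inv c \<otimes> b)) / of_nat (card (carrier G))"
  proof (intro arg_cong[where f = "\<lambda>z. z / _"] sum.cong refl)
    fix c assume c: "c \<in> carrier G"
    have "act (inv c) ?x = f (inv c \<otimes> b)" using c b by (simp add: f_eq)
    thus "(E (act (inv c) ?x) *\<^sub>v (Phi c *\<^sub>v u)) \<bullet>c (Phi c *\<^sub>v u) = Fv (inv c \<otimes> b)"
      unfolding u_def Phi_R_phi[OF c b] Fv_def by simp
  qed
  also have "(\<Sum>c\<in>carrier G. Fv (inv c \<otimes> b)) = (\<Sum>g\<in>carrier G. Fv g)"
    by (rule sum.reindex_bij_betw[OF bij_invmult[OF b]])
  finally show ?thesis .
qed

end


context hardsetup begin

lemma E2_car: "E2 x \<in> carrier_mat mt mt"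
  unfolding E2_def using S_car M_car IP_car by (auto intro!: add_carrier_mat mult_carrier_mat[of _ mt mt _ mt])

lemma E2_psd: assumes x: "x \<in> X" shows "psd mt (E2 x)"
  unfolding psd_def
proof (rule conjI[OF E2_car], intro ballI)
  fix v :: "complex vec" assume v: "v \<in> carrier_vec mt"
  have Sv: "S *\<^sub>v v \<in> carrier_vec mt" by (rule mult_mat_vec_carrier[OF S_car v])
  have MSv: "M x *\<^sub>v (S *\<^sub>v v) \<in> carrier_vec mt" by (rule mult_mat_vec_carrier[OF M_car Sv])
  have IPv: "IP *\<^sub>v v \<in> carrier_vec mt" by (rule mult_mat_vec_carrier[OF IP_car v])
  let ?c = "1 / of_nat (card X) :: complex"
  have SMS: "S * M x * S \<in> carrier_mat mt mt" by (rule mult_carrier_mat[OF mult_carrier_mat[OF S_car M_car] S_car])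
  have "E2 x *\<^sub>v v = (S * M x * S) *\<^sub>v v + (?c \<cdot>\<^sub>m IP) *\<^sub>v v"
    unfolding E2_def by (rule add_mult_distrib_mat_vec[OF SMS _ v]) (use IP_car in simp)
  also have "(S * M x * S) *\<^sub>v v = S *\<^sub>v (M x *\<^sub>v (S *\<^sub>v v))"
    using assoc_mult_mat_vec[OF mult_carrier_mat[OF S_car M_car] S_car v]
      assoc_mult_mat_vec[OF S_car M_car Sv] by simp
  also have "(?c \<cdot>\<^sub>m IP) *\<^sub>v v = ?c \<cdot>\<^sub>v (IP *\<^sub>v v)" by (rule smult_mat_vec[OF IP_car v])
  finally have e: "E2 x *\<^sub>v v = S *\<^sub>v (M x *\<^sub>v (S *\<^sub>v v)) + ?c \<cdot>\<^sub>v (IP *\<^sub>v v)" .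
  have "(E2 x *\<^sub>v v) \<bullet>c v = (S *\<^sub>v (M x *\<^sub>v (S *\<^sub>v v))) \<bullet>c v + (?c \<cdot>\<^sub>v (IP *\<^sub>v v)) \<bullet>c v"
    unfolding e by (rule cscalar_add_left[OF mult_mat_vec_carrier[OF S_car MSv] _ v]) (use IPv in simp)
  also have "(S *\<^sub>v (M x *\<^sub>v (S *\<^sub>v v))) \<bullet>c v = (M x *\<^sub>v (S *\<^sub>v v)) \<bullet>c (S *\<^sub>v v)"
    by (rule herm_vec[OF S_car S_herm MSv v])
  also have "(?c \<cdot>\<^sub>v (IP *\<^sub>v v)) \<bullet>c v = ?c * ((IP *\<^sub>v v) \<bullet>c v)" by (rule cscalar_smult_left[OF IPv v])
  finally have e2: "(E2 x *\<^sub>v v) \<bullet>c v = (M x *\<^sub>v (S *\<^sub>v v)) \<bullet>c (S *\<^sub>v v) + ?c * ((IP *\<^sub>v v) \<bullet>c v)" .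
  note m = M_psd[OF x Sv] and p = IP_psd[OF v]
  have c: "?c = complex_of_real (1 / real (card X))" by simp
  have cpos: "1 / real (card X) \<ge> 0" by simp
  show "Im ((E2 x *\<^sub>v v) \<bullet>c v) = 0 \<and> Re ((E2 x *\<^sub>v v) \<bullet>c v) \<ge> 0"
    unfolding e2 c using m p cpos by simp
qed

lemma M_sum: assumes k: "k < mt" and l: "l < mt"
  shows "(\<Sum>x\<in>X. M x $$ (k,l)) = Q $$ (k,l)"
proof -
  have inner: "(\<Sum>x\<in>X. (adj (Phi c) * E (act (inv c) x) * Phi c) $$ (k,l)) = (adj (Phi c) * Phi c) $$ (k,l)"
    if c: "c \<in> carrier G" for c
  proof -
    have "(\<Sum>x\<in>X. (adj (Phi c) * E (act (inv c) x) * Phi c) $$ (k,l))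
       = (\<Sum>x\<in>X. \<Sum>p<nd. \<Sum>q<nd. adj (Phi c) $$ (k,p) * E (act (inv c) x) $$ (p,q) * Phi c $$ (q,l))"
      by (intro sum.cong refl triple_entry[OF adj_carrier[OF Phi_car] EX[OF c] Phi_car k l])
    also have "\<dots> = (\<Sum>p<nd. \<Sum>q<nd. adj (Phi c) $$ (k,p) * (\<Sum>x\<in>X. E (act (inv c) x) $$ (p,q)) * Phi c $$ (q,l))"
      by (simp add: sum_distrib_left sum_distrib_right sum.swap[of _ X])
    also have "\<dots> = (\<Sum>p<nd. \<Sum>q<nd. adj (Phi c) $$ (k,p) * 1\<^sub>m nd $$ (p,q) * Phi c $$ (q,l))"
    proof (intro sum.cong refl)
      fix p q assume p: "p \<in> {..<nd}" and q: "q \<in> {..<nd}"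
      have "(\<Sum>x\<in>X. E (act (inv c) x) $$ (p,q)) = (\<Sum>x\<in>X. E x $$ (p,q))"
        by (rule sum.reindex_bij_betw[OF bij_act[OF inv_closed[OF c]], of "\<lambda>x. E x $$ (p,q)"])
      also have "\<dots> = 1\<^sub>m nd $$ (p,q)" using p q by (simp add: E_sum)
      finally show "adj (Phi c) $$ (k,p) * (\<Sum>x\<in>X. E (act (inv c) x) $$ (p,q)) * Phi c $$ (q,l)
          = adj (Phi c) $$ (k,p) * 1\<^sub>m nd $$ (p,q) * Phi c $$ (q,l)" by simp
    qed
    also have "\<dots> = (adj (Phi c) * 1\<^sub>m nd * Phi c) $$ (k,l)"
      by (rule triple_entry[symmetric, OF adj_carrier[OF Phi_car] one_carrier_mat Phi_car k l])
    also have "adj (Phi c) * 1\<^sub>m nd = adj (Phi c)" by (rule right_mult_one_mat[OF adj_carrier[OF Phi_car]])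
    finally show ?thesis .
  qed
  have "(\<Sum>x\<in>X. M x $$ (k,l)) = (\<Sum>x\<in>X. (\<Sum>c\<in>carrier G. (adj (Phi c) * E (act (inv c) x) * Phi c) $$ (k,l)) / of_nat (card (carrier G)))"
    using k l by (simp add: M_def avgm_index)
  also have "\<dots> = (\<Sum>c\<in>carrier G. (\<Sum>x\<in>X. (adj (Phi c) * E (act (inv c) x) * Phi c) $$ (k,l))) / of_nat (card (carrier G))"
    by (simp add: sum_divide_distrib[symmetric] sum.swap[of _ X])
  also have "\<dots> = (\<Sum>c\<in>carrier G. (adj (Phi c) * Phi c) $$ (k,l)) / of_nat (card (carrier G))"
    by (intro arg_cong[where f = "\<lambda>z. z / _"] sum.cong refl inner)
  also have "\<dots> = Q $$ (k,l)" using k l by (simp add: Q_def avgm_index)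
  finally show ?thesis .
qed

lemma E2_sum: assumes i: "i < mt" and j: "j < mt"
  shows "(\<Sum>x\<in>X. E2 x $$ (i,j)) = 1\<^sub>m mt $$ (i,j)"
proof -
  have e: "E2 x $$ (i,j) = (S * M x * S) $$ (i,j) + (1 / of_nat (card X)) * IP $$ (i,j)" for x
    unfolding E2_def using i j S_car M_car IP_car by simp
  have "(\<Sum>x\<in>X. (S * M x * S) $$ (i,j)) = (\<Sum>x\<in>X. \<Sum>k<mt. \<Sum>l<mt. S $$ (i,k) * M x $$ (k,l) * S $$ (l,j))"
    by (intro sum.cong refl triple_entry[OF S_car M_car S_car i j])
  also have "\<dots> = (\<Sum>k<mt. \<Sum>l<mt. S $$ (i,k) * (\<Sum>x\<in>X. M x $$ (k,l)) * S $$ (l,j))"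
    by (simp add: sum_distrib_left sum_distrib_right sum.swap[of _ X])
  also have "\<dots> = (\<Sum>k<mt. \<Sum>l<mt. S $$ (i,k) * Q $$ (k,l) * S $$ (l,j))"
    by (intro sum.cong refl) (simp add: M_sum)
  also have "\<dots> = (S * Q * S) $$ (i,j)" by (rule triple_entry[symmetric, OF S_car Q_car S_car i j])
  also have "\<dots> = Pr $$ (i,j)" by (simp add: SQS)
  finally have 1: "(\<Sum>x\<in>X. (S * M x * S) $$ (i,j)) = Pr $$ (i,j)" .
  have 2: "(\<Sum>x\<in>X. (1 / of_nat (card X)) * IP $$ (i,j)) = IP $$ (i,j)" using X_card by simp
  have "(\<Sum>x\<in>X. E2 x $$ (i,j)) = Pr $$ (i,j) + IP $$ (i,j)"
    unfolding e sum.distrib 1 2 ..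
  also have "\<dots> = (Pr + IP) $$ (i,j)" using i j Pi_car IP_car by simp
  finally show ?thesis by (simp add: Pi_IP)
qed

lemma hard_result:
  assumes P: "success_prob G f E (\<lambda>a. adaptive_state (kron (\<pi> a) (1\<^sub>m N)) U t \<psi>) = P"
  shows "nonadaptive_alg_exists G d \<pi> X f t P"
  unfolding nonadaptive_alg_exists_def
proof (intro exI conjI)
  show "Dt \<ge> 1" using D_pos by (metis One_nat_def Suc_leI)
  show "unit_vec (d ^ t * Dt) phi2" using phi2_car phi2_unit by (simp add: unit_vec_def)
  show "povm (d ^ t * Dt) X E2" unfolding povm_def using E2_psd E2_sum by simp
  have R': "\<And>a. kron (tpow (\<pi> a) t) (1\<^sub>m Dt) = R a" by (simp add: R_def \<rho>_def)
  let ?F = "(\<Sum>g\<in>carrier G. Fv g) / of_nat (card (carrier G))"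
  have "success_prob G f E2 (\<lambda>a. kron (tpow (\<pi> a) t) (1\<^sub>m Dt) *\<^sub>v phi2)
     = (\<Sum>b\<in>carrier G. Re ?F) / real (card (carrier G))"
    unfolding success_prob_def R' by (intro arg_cong[where f = "\<lambda>z. z / _"] sum.cong refl) (simp add: success_b)
  also have "\<dots> = Re ?F" using cardG by simp
  also have "\<dots> = (\<Sum>g\<in>carrier G. Re (Fv g)) / real (card (carrier G))"
    by (simp add: Re_divide_of_nat Re_sum)
  also have "\<dots> = P" using P unfolding success_prob_def Fv_def \<psi>a_def by simp
  finally show "success_prob G f E2 (\<lambda>a. kron (tpow (\<pi> a) t) (1\<^sub>m Dt) *\<^sub>v phi2) = P" .
qed

end


definition pmat :: "nat \<Rightarrow> (nat \<Rightarrow> nat) \<Rightarrow> complex mat" where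
  "pmat n \<sigma> = mat n n (\<lambda>(p,q). if q = \<sigma> p then 1 else 0)"

lemma pmat_car[simp]: "pmat n \<sigma> \<in> carrier_mat n n" by (simp add: pmat_def)
lemma pmat_dims[simp]: "dim_row (pmat n \<sigma>) = n" "dim_col (pmat n \<sigma>) = n" by (simp_all add: pmat_def)

lemma cnj_if01: "cnj (if P then 1 else 0) = (if P then 1 else 0)" by simp

lemma pmat_conj:
  assumes B: "B \<in> carrier_mat n n" and s: "\<And>p. p < n \<Longrightarrow> \<sigma> p < n" and p: "p < n" and q: "q < n"
  shows "(pmat n \<sigma> * B * adj (pmat n \<sigma>)) $$ (p,q) = B $$ (\<sigma> p, \<sigma> q)"
proof -
  have "(pmat n \<sigma> * B * adj (pmat n \<sigma>)) $$ (p,q) = (\<Sum>k<n. \<Sum>l<n. pmat n \<sigma> $$ (p,k) * B $$ (k,l) * adj (pmat n \<sigma>) $$ (l,q))"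
    by (rule triple_entry[OF pmat_car B adj_carrier[OF pmat_car] p q])
  also have "\<dots> = (\<Sum>k<n. if k = \<sigma> p then (\<Sum>l<n. if l = \<sigma> q then B $$ (k,l) else 0) else 0)"
  proof (intro sum.cong refl)
    fix k assume k: "k \<in> {..<n}"
    show "(\<Sum>l<n. pmat n \<sigma> $$ (p,k) * B $$ (k,l) * adj (pmat n \<sigma>) $$ (l,q)) =
        (if k = \<sigma> p then (\<Sum>l<n. if l = \<sigma> q then B $$ (k,l) else 0) else 0)"
      using p q k s[OF q] by (auto simp: pmat_def cnj_if01 sum_delta_mult)
  qed
  also have "\<dots> = B $$ (\<sigma> p, \<sigma> q)" using s[OF p] s[OF q] by simp
  finally show ?thesis .
qed

lemma pmat_unitary:
  assumes s: "\<And>p. p < n \<Longrightarrow> \<sigma> p < n" and inj: "\<And>p q. p < n \<Longrightarrow> q < n \<Longrightarrow> \<sigma> p = \<sigma> q \<Longrightarrow> p = q"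
  shows "unitary_mat n (pmat n \<sigma>)"
proof -
  have 1: "pmat n \<sigma> * adj (pmat n \<sigma>) = 1\<^sub>m n"
  proof (rule eq_matI)
    fix p q assume "p < dim_row (1\<^sub>m n)" "q < dim_col (1\<^sub>m n)"
    hence p: "p < n" and q: "q < n" by auto
    have "(pmat n \<sigma> * adj (pmat n \<sigma>)) $$ (p,q) = (\<Sum>k<n. pmat n \<sigma> $$ (p,k) * adj (pmat n \<sigma>) $$ (k,q))"
      by (rule mat_mult_entry[OF pmat_car adj_carrier[OF pmat_car] p q])
    also have "\<dots> = (\<Sum>k<n. if k = \<sigma> p then (if \<sigma> p = \<sigma> q then 1 else 0) else 0)"
      using p q by (intro sum.cong refl) (auto simp: pmat_def)
    also have "\<dots> = (if \<sigma> p = \<sigma> q then 1 else 0)" using s[OF p] by simp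
    also have "\<dots> = 1\<^sub>m n $$ (p,q)" using p q inj[OF p q] by auto
    finally show "(pmat n \<sigma> * adj (pmat n \<sigma>)) $$ (p,q) = 1\<^sub>m n $$ (p,q)" .
  qed auto
  have 2: "adj (pmat n \<sigma>) * pmat n \<sigma> = 1\<^sub>m n"
    by (rule mat_mult_left_right_inverse[OF pmat_car adj_carrier[OF pmat_car] 1])
  show ?thesis using 1 2 by (simp add: unitary_mat_def)
qed

lemma enc3_lt: "i < e \<Longrightarrow> j < d \<Longrightarrow> k < M \<Longrightarrow> i*(d*M) + j*M + k < e*(d*(M::nat))"
proof -
  assume i: "i < e" and j: "j < d" and k: "k < M"
  have "j*M + k < d*M" using idx_lt[OF j k] .
  hence "i*(d*M) + (j*M + k) < e*(d*M)" using idx_lt[OF i] by blast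
  thus ?thesis by (simp add: add.assoc)
qed

lemma enc3_dec:
  assumes j: "j < d" and k: "k < (M::nat)"
  shows "(i*(d*M) + j*M + k) div (d*M) = i" "(i*(d*M) + j*M + k) mod (d*M) = j*M + k"
    "((i*(d*M) + j*M + k) mod (d*M)) div M = j" "(i*(d*M) + j*M + k) mod M = k"
proof -
  have jk: "j*M + k < d*M" using idx_lt[OF j k] .
  show a: "(i*(d*M) + j*M + k) div (d*M) = i" using jk by (simp add: add.assoc)
  show b: "(i*(d*M) + j*M + k) mod (d*M) = j*M + k" using jk by (simp add: add.assoc)
  show "((i*(d*M) + j*M + k) mod (d*M)) div M = j" using b k by simp
  have "(i*(d*M) + j*M + k) = (i*d + j)*M + k" by (simp add: algebra_simps)
  thus "(i*(d*M) + j*M + k) mod M = k" using k by simp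
qed

lemma enc3_ex:
  assumes p: "p < e*(d*(M::nat))"
  shows "\<exists>i j k. i < e \<and> j < d \<and> k < M \<and> p = i*(d*M) + j*M + k"
proof -
  have M0: "M > 0" and dM0: "d*M > 0" using p by (cases M; cases d; auto)+
  define i where "i = p div (d*M)"
  define j where "j = (p mod (d*M)) div M"
  define k where "k = p mod M"
  have i: "i < e" unfolding i_def using p by (simp add: less_mult_imp_div_less)
  have "p mod (d*M) < d*M" using dM0 by simp
  hence j: "j < d" unfolding j_def by (simp add: less_mult_imp_div_less)
  have k: "k < M" unfolding k_def using M0 by simp
  have "p = i*(d*M) + p mod (d*M)" unfolding i_def by (rule div_mult_mod_eq[symmetric])
  also have "p mod (d*M) = j*M + k" unfolding j_def k_def
    by (metis div_mult_mod_eq mod_mult2_eq mult.commute add.commute mod_mod_cancel dvd_triv_right)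
  finally show ?thesis using i j k by (auto simp: add.assoc)
qed

definition swp :: "nat \<Rightarrow> nat \<Rightarrow> nat \<Rightarrow> nat \<Rightarrow> nat" where
  "swp e d M p = ((p mod (d*M)) div M) * (e*M) + (p div (d*M)) * M + p mod M"

lemma swp_enc: "i < e \<Longrightarrow> j < d \<Longrightarrow> k < M \<Longrightarrow> swp e d M (i*(d*M) + j*M + k) = j*(e*M) + i*M + k"
  unfolding swp_def by (simp add: enc3_dec)

lemma swap_lemma:
  assumes A: "A \<in> carrier_mat d d"
  shows "kron (1\<^sub>m e) (kron A (1\<^sub>m M)) = pmat (e*(d*M)) (swp e d M) * kron A (1\<^sub>m (e*M)) * adj (pmat (e*(d*M)) (swp e d M))"
    (is "?L = ?P * ?B * adj ?P")
proof -
  let ?n = "e*(d*M)"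
  have nn: "d*(e*M) = ?n" by (simp add: mult_ac)
  have Bc: "?B \<in> carrier_mat ?n ?n" using kron_carrier[OF A one_carrier_mat[of "e*M"]] nn by simp
  have s: "swp e d M p < ?n" if p: "p < ?n" for p
  proof -
    obtain i j k where ijk: "i < e" "j < d" "k < M" "p = i*(e*M) + j*M + k \<or> p = i*(d*M) + j*M + k"
      using enc3_ex[OF p] by blast
    obtain i j k where ijk: "i < e" "j < d" "k < M" "p = i*(d*M) + j*M + k"
      using enc3_ex[OF p] by blast
    have "swp e d M p = j*(e*M) + i*M + k" using ijk swp_enc by simp
    also have "\<dots> < d*(e*M)" by (rule enc3_lt[OF ijk(2,1,3)])
    finally show ?thesis using nn by simp
  qed
  show ?thesis
  proof (rule eq_matI)
    fix p q assume "p < dim_row (?P * ?B * adj ?P)" "q < dim_col (?P * ?B * adj ?P)"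
    hence p: "p < ?n" and q: "q < ?n" by auto
    obtain i j k where a: "i < e" "j < d" "k < M" "p = i*(d*M) + j*M + k" using enc3_ex[OF p] by blast
    obtain i' j' k' where b: "i' < e" "j' < d" "k' < M" "q = i'*(d*M) + j'*M + k'" using enc3_ex[OF q] by blast
    have M0: "M > 0" using a by auto
    have e0: "e*M > 0" using a by auto
    have "(?P * ?B * adj ?P) $$ (p,q) = ?B $$ (swp e d M p, swp e d M q)"
      by (rule pmat_conj[OF Bc s p q])
    also have "\<dots> = ?B $$ (j*(e*M) + (i*M + k), j'*(e*M) + (i'*M + k'))" using a b swp_enc by (simp add: add.assoc)
    also have "\<dots> = A $$ (j,j') * 1\<^sub>m (e*M) $$ (i*M + k, i'*M + k')"
      by (rule kron_index2[OF A one_carrier_mat a(2) b(2) idx_lt[OF a(1,3)] idx_lt[OF b(1,3)]])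
    also have "\<dots> = (if i = i' then 1 else 0) * (A $$ (j,j') * (if k = k' then 1 else 0))"
    proof -
      have "i*M + k = i'*M + k' \<longleftrightarrow> i = i' \<and> k = k'"
      proof
        assume h: "i*M + k = i'*M + k'"
        have "(i*M + k) div M = i" "(i'*M + k') div M = i'" "(i*M + k) mod M = k" "(i'*M + k') mod M = k'"
          using a b by simp_all
        thus "i = i' \<and> k = k'" using h by metis
      qed simp
      thus ?thesis using idx_lt[OF a(1,3)] idx_lt[OF b(1,3)] by auto
    qed
    also have "\<dots> = 1\<^sub>m e $$ (i,i') * kron A (1\<^sub>m M) $$ (j*M+k, j'*M+k')"
      using a b by (simp add: kron_index2[OF A one_carrier_mat])
    also have "\<dots> = ?L $$ (i*(d*M) + (j*M+k), i'*(d*M) + (j'*M+k'))"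
      by (rule kron_index2[symmetric, OF one_carrier_mat kron_carrier[OF A one_carrier_mat] a(1) b(1)
          idx_lt[OF a(2,3)] idx_lt[OF b(2,3)]])
    also have "\<dots> = ?L $$ (p,q)" using a b by (simp add: add.assoc)
    finally show "?L $$ (p,q) = (?P * ?B * adj ?P) $$ (p,q)" by simp
  qed (use A in auto)
qed


lemma shift_adaptive:
  "adaptive_state Or (\<lambda>i. if i = 1 then V else U (i - 1)) (Suc j) x = adaptive_state Or U j (V *\<^sub>v (Or *\<^sub>v x))"
  by (induct j) auto

lemma swp_props:
  assumes p: "p < e*(d*M)" and q: "q < e*(d*M)"
  shows "swp e d M p < e*(d*M)" "swp e d M p = swp e d M q \<Longrightarrow> p = q"
proof -
  obtain i j k where a: "i < e" "j < d" "k < M" "p = i*(d*M) + j*M + k" using enc3_ex[OF p] by blast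
  obtain i' j' k' where b: "i' < e" "j' < d" "k' < M" "q = i'*(d*M) + j'*M + k'" using enc3_ex[OF q] by blast
  have sp: "swp e d M p = j*(e*M) + (i*M + k)" using a swp_enc by (simp add: add.assoc)
  have sq: "swp e d M q = j'*(e*M) + (i'*M + k')" using b swp_enc by (simp add: add.assoc)
  have "j*(e*M) + (i*M + k) < d*(e*M)" by (rule idx_lt[OF a(2) idx_lt[OF a(1,3)]])
  thus "swp e d M p < e*(d*M)" using sp by (simp add: mult_ac)
  assume eq: "swp e d M p = swp e d M q"
  have l1: "i*M + k < e*M" "i'*M + k' < e*M" using idx_lt a b by auto
  have "(j*(e*M) + (i*M + k)) div (e*M) = j" "(j'*(e*M) + (i'*M + k')) div (e*M) = j'"
    "(j*(e*M) + (i*M + k)) mod (e*M) = i*M + k" "(j'*(e*M) + (i'*M + k')) mod (e*M) = i'*M + k'"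
    using l1 by simp_all
  hence jj: "j = j'" and ik: "i*M + k = i'*M + k'" using eq sp sq by metis+
  have "(i*M + k) div M = i" "(i'*M + k') div M = i'" "(i*M + k) mod M = k" "(i'*M + k') mod M = k'"
    using a b by simp_all
  hence "i = i'" "k = k'" using ik by metis+
  thus "p = q" using a b jj by simp
qed

lemma sim:
  "\<exists>U Z. unitary_mat (d^(Suc k)*M) Z \<and> (\<forall>i\<in>{1..Suc k}. unitary_mat (d*(d^k*M)) (U i)) \<and>
     (\<forall>A\<in>carrier_mat d d. \<forall>v\<in>carrier_vec (d^(Suc k)*M).
        adaptive_state (kron A (1\<^sub>m (d^k*M))) U (Suc k) (Z *\<^sub>v v) = kron (tpow A (Suc k)) (1\<^sub>m M) *\<^sub>v v)"
proof (induct k arbitrary: M)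
  case 0
  show ?case
  proof (intro exI conjI ballI)
    show "unitary_mat (d^(Suc 0)*M) (1\<^sub>m (d*M))" using unitary_one by simp
    show "unitary_mat (d*(d^0*M)) (1\<^sub>m (d*M))" for i using unitary_one by simp
    fix A :: "complex mat" and v :: "complex vec" assume A: "A \<in> carrier_mat d d" and v: "v \<in> carrier_vec (d^(Suc 0)*M)"
    have v': "v \<in> carrier_vec (d*M)" using v by simp
    have O: "kron A (1\<^sub>m M) *\<^sub>v v \<in> carrier_vec (d*M)" using A v' by (auto intro!: mult_mat_vec_carrier)
    show "adaptive_state (kron A (1\<^sub>m (d^0*M))) (\<lambda>_. 1\<^sub>m (d*M)) (Suc 0) (1\<^sub>m (d*M) *\<^sub>v v)
        = kron (tpow A (Suc 0)) (1\<^sub>m M) *\<^sub>v v"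
      using v' O tpow_1[OF A] by simp
  qed
next
  case (Suc k M)
  obtain U Z where Z: "unitary_mat (d^(Suc k)*(d*M)) Z"
    and U: "\<forall>i\<in>{1..Suc k}. unitary_mat (d*(d^k*(d*M))) (U i)"
    and H: "\<forall>A\<in>carrier_mat d d. \<forall>v\<in>carrier_vec (d^(Suc k)*(d*M)).
        adaptive_state (kron A (1\<^sub>m (d^k*(d*M)))) U (Suc k) (Z *\<^sub>v v) = kron (tpow A (Suc k)) (1\<^sub>m (d*M)) *\<^sub>v v"
    using Suc.hyps[of "d*M"] by blast
  let ?e = "d^(Suc k)"
  let ?n = "?e*(d*M)"
  have n1: "d^(Suc (Suc k))*M = ?n" by (simp add: mult_ac)
  have n2: "d*(d^(Suc k)*M) = ?n" by (simp add: mult_ac)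
  have n3: "d^k*(d*M) = d^(Suc k)*M" by (simp add: mult_ac)
  have n4: "d*(d^k*(d*M)) = ?n" by (simp add: mult_ac)
  let ?P = "pmat ?n (swp ?e d M)"
  have Pu: "unitary_mat ?n ?P"
    by (rule pmat_unitary) (use swp_props in auto)
  have Pc: "?P \<in> carrier_mat ?n ?n" by simp
  have Zc: "Z \<in> carrier_mat ?n ?n" using Z by (simp add: unitary_mat_def)
  have Zu: "unitary_mat ?n Z" using Z by simp
  define U' where "U' = (\<lambda>i. if i = 1 then Z * ?P else U (i - 1))"
  show ?case
  proof (intro exI conjI ballI)
    show "unitary_mat (d^(Suc (Suc k))*M) (adj ?P)" unfolding n1 by (rule unitary_adj[OF Pu])
    fix i assume i: "i \<in> {1..Suc (Suc k)}"
    show "unitary_mat (d*(d^(Suc k)*M)) (U' i)"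
    proof (cases "i = 1")
      case True
      hence "U' i = Z * ?P" by (simp add: U'_def)
      thus ?thesis unfolding n2 by (simp only:) (rule unitary_mult[OF Zu Pu])
    next
      case False
      hence "i - 1 \<in> {1..Suc k}" using i by auto
      thus ?thesis using U False unfolding n2 U'_def by (simp add: n4)
    qed
  next
    fix A :: "complex mat" and v :: "complex vec" assume A: "A \<in> carrier_mat d d" and v: "v \<in> carrier_vec (d^(Suc (Suc k))*M)"
    have vn: "v \<in> carrier_vec ?n" using v unfolding n1 .
    let ?O = "kron A (1\<^sub>m (d^(Suc k)*M))"
    have Oc: "?O \<in> carrier_mat ?n ?n" using kron_carrier[OF A one_carrier_mat[of "d^(Suc k)*M"]] unfolding n2 .
    have y: "?P *\<^sub>v (?O *\<^sub>v (adj ?P *\<^sub>v v)) \<in> carrier_vec ?n"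
      using Pc Oc vn by (auto intro!: mult_mat_vec_carrier)
    have sw: "?P *\<^sub>v (?O *\<^sub>v (adj ?P *\<^sub>v v)) = kron (1\<^sub>m ?e) (kron A (1\<^sub>m M)) *\<^sub>v v"
    proof -
      have "?P *\<^sub>v (?O *\<^sub>v (adj ?P *\<^sub>v v)) = (?P * ?O * adj ?P) *\<^sub>v v"
        using assoc_mult_mat_vec[OF mult_carrier_mat[OF Pc Oc] adj_carrier[OF Pc] vn]
          assoc_mult_mat_vec[OF Pc Oc mult_mat_vec_carrier[OF adj_carrier[OF Pc] vn]] by simp
      also have "?P * ?O * adj ?P = kron (1\<^sub>m ?e) (kron A (1\<^sub>m M))"
        using swap_lemma[OF A, of ?e M] by simp
      finally show ?thesis .
    qed
    have "adaptive_state (kron A (1\<^sub>m (d^(Suc k)*M))) U' (Suc (Suc k)) (adj ?P *\<^sub>v v)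
        = adaptive_state ?O U (Suc k) ((Z * ?P) *\<^sub>v (?O *\<^sub>v (adj ?P *\<^sub>v v)))"
      unfolding U'_def by (rule shift_adaptive)
    also have "(Z * ?P) *\<^sub>v (?O *\<^sub>v (adj ?P *\<^sub>v v)) = Z *\<^sub>v (?P *\<^sub>v (?O *\<^sub>v (adj ?P *\<^sub>v v)))"
      using Zc Pc Oc vn by (intro assoc_mult_mat_vec[of _ ?n ?n _ ?n]) (auto intro!: mult_mat_vec_carrier)
    also have "adaptive_state ?O U (Suc k) \<dots> = kron (tpow A (Suc k)) (1\<^sub>m (d*M)) *\<^sub>v (?P *\<^sub>v (?O *\<^sub>v (adj ?P *\<^sub>v v)))"
      using H[rule_format, OF A, of "?P *\<^sub>v (?O *\<^sub>v (adj ?P *\<^sub>v v))"] y n3 by simp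
    also have "\<dots> = kron (tpow A (Suc k)) (1\<^sub>m (d*M)) *\<^sub>v (kron (1\<^sub>m ?e) (kron A (1\<^sub>m M)) *\<^sub>v v)" unfolding sw ..
    also have "\<dots> = (kron (tpow A (Suc k)) (1\<^sub>m (d*M)) * kron (1\<^sub>m ?e) (kron A (1\<^sub>m M))) *\<^sub>v v"
      using vn tpow_carrier[OF A, of "Suc k"] A
      by (intro assoc_mult_mat_vec[symmetric, of _ ?n ?n _ ?n]) auto
    also have "kron (tpow A (Suc k)) (1\<^sub>m (d*M)) * kron (1\<^sub>m ?e) (kron A (1\<^sub>m M))
        = kron (tpow A (Suc k) * 1\<^sub>m ?e) (1\<^sub>m (d*M) * kron A (1\<^sub>m M))"
      by (rule kron_mult[OF tpow_carrier[OF A] one_carrier_mat one_carrier_mat kron_carrier[OF A one_carrier_mat]])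
    also have "\<dots> = kron (tpow A (Suc k)) (kron A (1\<^sub>m M))"
      using right_mult_one_mat[OF tpow_carrier[OF A, of "Suc k"]] left_mult_one_mat[OF kron_carrier[OF A one_carrier_mat[of M]]]
      by simp
    also have "\<dots> = kron (tpow A (Suc (Suc k))) (1\<^sub>m M)"
    proof -
      have e: "tpow A (Suc (Suc k)) = kron (tpow A (Suc k)) A" by simp
      show ?thesis by (simp only: e kron_assoc[OF tpow_carrier[OF A, of "Suc k"] A one_carrier_mat])
    qed
    finally show "adaptive_state (kron A (1\<^sub>m (d^(Suc k)*M))) U' (Suc (Suc k)) (adj ?P *\<^sub>v v)
        = kron (tpow A (Suc (Suc k))) (1\<^sub>m M) *\<^sub>v v" .
  qed
qed

lemma easy_dir:
  fixes G :: "('g, 'b) monoid_scheme"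
  assumes rep: "unitary_rep G d \<pi>" and t: "t \<ge> 1" and na: "nonadaptive_alg_exists G d \<pi> X f t P"
  shows "adaptive_alg_exists G d \<pi> X f t P"
proof -
  obtain N \<psi> E where N: "N \<ge> 1" and psi: "unit_vec (d^t*N) \<psi>" and E: "povm (d^t*N) X E"
    and P: "success_prob G f E (\<lambda>a. kron (tpow (\<pi> a) t) (1\<^sub>m N) *\<^sub>v \<psi>) = P"
    using na unfolding nonadaptive_alg_exists_def by blast
  obtain k where tk: "t = Suc k" using t by (cases t) auto
  have d0: "d > 0"
  proof (rule ccontr)
    assume "\<not> d > 0" hence "d^t*N = 0" using tk by simp
    hence "\<psi> \<in> carrier_vec 0" using psi by (metis unit_vec_def)
    hence "\<psi> \<bullet>c \<psi> = 0" by (simp add: cscalar_sum[of _ 0])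
    thus False using psi by (simp add: unit_vec_def)
  qed
  obtain U Z where Z: "unitary_mat (d^(Suc k)*N) Z" and U: "\<forall>i\<in>{1..Suc k}. unitary_mat (d*(d^k*N)) (U i)"
    and H: "\<forall>A\<in>carrier_mat d d. \<forall>v\<in>carrier_vec (d^(Suc k)*N).
        adaptive_state (kron A (1\<^sub>m (d^k*N))) U (Suc k) (Z *\<^sub>v v) = kron (tpow A (Suc k)) (1\<^sub>m N) *\<^sub>v v"
    using sim[of d k N] by blast
  have eq: "d*(d^k*N) = d^t*N" using tk by simp
  have psic: "\<psi> \<in> carrier_vec (d^t*N)" using psi by (simp add: unit_vec_def)
  show ?thesis unfolding adaptive_alg_exists_def
  proof (intro exI conjI)
    show "d^k*N \<ge> 1" using d0 N by (simp add: Suc_le_eq)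
    show "unit_vec (d*(d^k*N)) (Z *\<^sub>v \<psi>)"
      using unitary_norm[OF Z] psi Z tk unfolding eq
      by (auto simp: unit_vec_def unitary_mat_def intro!: mult_mat_vec_carrier)
    show "\<forall>i\<in>{1..t}. unitary_mat (d*(d^k*N)) (U i)" using U tk by simp
    show "povm (d*(d^k*N)) X E" unfolding eq by (rule E)
    have "success_prob G f E (\<lambda>a. adaptive_state (kron (\<pi> a) (1\<^sub>m (d^k*N))) U t (Z *\<^sub>v \<psi>))
        = success_prob G f E (\<lambda>a. kron (tpow (\<pi> a) t) (1\<^sub>m N) *\<^sub>v \<psi>)"
      unfolding success_prob_def
    proof (intro arg_cong[where f = "\<lambda>z. z / _"] sum.cong refl)
      fix a assume a: "a \<in> carrier G"
      have A: "\<pi> a \<in> carrier_mat d d" using rep a by (simp add: unitary_rep_def unitary_mat_def)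
      have "adaptive_state (kron (\<pi> a) (1\<^sub>m (d^k*N))) U t (Z *\<^sub>v \<psi>) = kron (tpow (\<pi> a) t) (1\<^sub>m N) *\<^sub>v \<psi>"
        using H[rule_format, OF A, of \<psi>] psic tk by simp
      thus "Re ((E (f a) *\<^sub>v adaptive_state (kron (\<pi> a) (1\<^sub>m (d^k*N))) U t (Z *\<^sub>v \<psi>)) \<bullet>c
                adaptive_state (kron (\<pi> a) (1\<^sub>m (d^k*N))) U t (Z *\<^sub>v \<psi>)) =
            Re ((E (f a) *\<^sub>v (kron (tpow (\<pi> a) t) (1\<^sub>m N) *\<^sub>v \<psi>)) \<bullet>c (kron (tpow (\<pi> a) t) (1\<^sub>m N) *\<^sub>v \<psi>))"
        by simp
    qed
    thus "success_prob G f E (\<lambda>a. adaptive_state (kron (\<pi> a) (1\<^sub>m (d^k*N))) U t (Z *\<^sub>v \<psi>)) = P"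
      using P by simp
  qed
qed

theorem theorem1:
  fixes G :: "('g, 'b) monoid_scheme" and d :: nat and \<pi> :: "'g \<Rightarrow> complex mat"
    and X :: "'x set" and act :: "'g \<Rightarrow> 'x \<Rightarrow> 'x" and f :: "'g \<Rightarrow> 'x"
    and t :: nat and P :: real
  assumes "group G" and "finite (carrier G)"
    and "unitary_rep G d \<pi>"
    and "coset_identification G X act f"
    and "t \<ge> 1" and "0 \<le> P" and "P \<le> 1"
  shows "adaptive_alg_exists G d \<pi> X f t P \<longleftrightarrow> nonadaptive_alg_exists G d \<pi> X f t P"
proof
  assume "adaptive_alg_exists G d \<pi> X f t P"
  then obtain N \<psi> U E where N: "N \<ge> 1" and psi: "unit_vec (d * N) \<psi>"
    and U: "\<forall>i\<in>{1..t}. unitary_mat (d * N) (U i)" and E: "povm (d * N) X E"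
    and P: "success_prob G f E (\<lambda>a. adaptive_state (kron (\<pi> a) (1\<^sub>m N)) U t \<psi>) = P"
    unfolding adaptive_alg_exists_def by blast
  interpret hs: hardsetup G d N t \<pi> U \<psi> E X act f
    unfolding hardsetup_def using assms N psi U E by auto
  show "nonadaptive_alg_exists G d \<pi> X f t P" by (rule hs.hard_result[OF P])
next
  assume "nonadaptive_alg_exists G d \<pi> X f t P"
  thus "adaptive_alg_exists G d \<pi> X f t P" by (rule easy_dir[OF assms(3) assms(5)])
qed


end
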